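(* Let $\epsilon>0$, $\beta\ge 0$, let $M\ge 4$ be an even integer and $N\ge 3$ an integer, and let $\mathcal A$ be the upwind Shishkin-mesh matrix described in the context. Let $x=\mathcal A^{-1}b$ and consider the multiplicative Schwarz method $x^{(k+1)}=T_{ij}x^{(k)}+v$, $k=0,1,2,\dots$, with $(i,j)\in\{(1,2),(2,1)\}$, $v=(I-T_{ij})x$, arbitrary $x^{(0)}$, and errors $e^{(k)}=x-x^{(k)}$ (with $e^{(0)}\ne 0$). Then \[ \frac{\|e^{(k+1)}\|_\infty}{\|e^{(0)}\|_\infty}\le \rho^{k}\,\|T_{ij}\|_\infty,\qquad k=0,1,2,\dots, \] where \[ \rho=\frac{\epsilon}{\epsilon+H_y},\qquad \|T_{12}\|_\infty\le\rho,\qquad \|T_{21}\|_\infty\le 1. \]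
   Context: Setting: let $\tau_y=\min\{1/2,\,2\epsilon\ln M\}$, $H_x=1/N$, $H_y=2(1-\tau_y)/M$, $h_y=2\tau_y/M$, and $m=M/2-1$. Define the scalars $d_H=-\frac{\epsilon}{H_y^2}-\frac1{H_y}$, $d=-\frac{2\epsilon}{H_y(H_y+h_y)}-\frac1{H_y}$, $d_h=-\frac{\epsilon}{h_y^2}-\frac1{h_y}$, $e_H=-\frac{\epsilon}{H_y^2}$, $e=-\frac{2\epsilon}{h_y(H_y+h_y)}$, $e_h=-\frac{\epsilon}{h_y^2}$, and $a_H=\frac{2\epsilon}{H_x^2}+\frac{2\epsilon}{H_y^2}+\frac1{H_y}+\beta$, $a=\frac{2\epsilon}{H_x^2}+\frac{2\epsilon}{H_yh_y}+\frac1{H_y}+\beta$, $a_h=\frac{2\epsilon}{H_x^2}+\frac{2\epsilon}{h_y^2}+\frac1{h_y}+\beta$. With $I$ the identity of size $N-1$, let $C_H=d_HI$, $C=dI$, $C_h=d_hI$, $B_H=e_HI$, $B=eI$, $B_h=e_hI$, and let $A_H,A,A_h$ be the $(N-1)\times(N-1)$ tridiagonal Toeplitz matrices with off-diagonal entries $-\epsilon/H_x^2$ and diagonal entries $a_H,a,a_h$. Let $\hat A_H$ (resp. $\hat A_h$) be the $m\times m$ block tridiagonal matrix with diagonal blocks $A_H$ (resp. $A_h$), subdiagonal blocks $C_H$ (resp. $C_h$) and superdiagonal blocks $B_H$ (resp. $B_h$), and $\mathcal A=\begin{bmatrix}\hat A_H & e_m\otimes B_H & 0\\ e_m^{T}\otimes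 C & A & e_1^{T}\otimes B\\ 0 & e_1\otimes C_h & \hat A_h\end{bmatrix}$, with $e_1,e_m$ the first and last canonical basis vectors of $\mathbb R^m$ and $\otimes$ the Kronecker product. (This is the upwind finite difference discretization of $-\epsilon\Delta u+u_y+\beta u=f$ on $(0,1)^2$ with Dirichlet boundary conditions on the Shishkin mesh with nodes $(iH_x,y_j)$, $y_j=jH_y$ for $j\le M/2$ and $y_j=1-(M-j)h_y$ for $j>M/2$, in lexicographic line ordering.) Let $n=N-1$, $A_1=\begin{bmatrix}\hat A_H & e_m\otimes B_H\\ e_m^{T}\otimes C & A\end{bmatrix}$, $A_2=\begin{bmatrix} A & e_1^{T}\otimes B\\ e_1\otimes C_h & \hat A_h\end{bmatrix}$, $R_1=[I_{n(m+1)}\;\,0]$, $R_2=[0\;\,I_{n(m+1)}]$, $P_i=R_i^{T}A_i^{-1}R_i\mathcal A$, $Q_i=I-P_i$, and the multiplicative Schwarz iteration matrices $T_{12}=Q_2Q_1$, $T_{21}=Q_1Q_2$. *)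

theory Defs
  imports "Jordan_Normal_Form.Gauss_Jordan_Elimination"
begin

definition tau_y :: "real \<Rightarrow> nat \<Rightarrow> real" where
  "tau_y eps M = min (1/2) (2 * eps * ln (real M))"

definition Hx :: "nat \<Rightarrow> real" where "Hx N = 1 / real N"
definition Hy :: "real \<Rightarrow> nat \<Rightarrow> real" where "Hy eps M = 2 * (1 - tau_y eps M) / real M"
definition hy :: "real \<Rightarrow> nat \<Rightarrow> real" where "hy eps M = 2 * tau_y eps M / real M"

definition nn :: "nat \<Rightarrow> nat" where "nn N = N - 1"
definition mm :: "nat \<Rightarrow> nat" where "mm M = M div 2 - 1"

definition dH :: "real \<Rightarrow> nat \<Rightarrow> real" where
  "dH eps M = - eps / (Hy eps M)^2 - 1 / Hy eps M"
definition dd :: "real \<Rightarrow> nat \<Rightarrow> real" where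
  "dd eps M = - 2 * eps / (Hy eps M * (Hy eps M + hy eps M)) - 1 / Hy eps M"
definition dh :: "real \<Rightarrow> nat \<Rightarrow> real" where
  "dh eps M = - eps / (hy eps M)^2 - 1 / hy eps M"
definition eH :: "real \<Rightarrow> nat \<Rightarrow> real" where
  "eH eps M = - eps / (Hy eps M)^2"
definition ee :: "real \<Rightarrow> nat \<Rightarrow> real" where
  "ee eps M = - 2 * eps / (hy eps M * (Hy eps M + hy eps M))"
definition eh :: "real \<Rightarrow> nat \<Rightarrow> real" where
  "eh eps M = - eps / (hy eps M)^2"
definition aH :: "real \<Rightarrow> real \<Rightarrow> nat \<Rightarrow> nat \<Rightarrow> real" where
  "aH eps beta M N = 2 * eps / (Hx N)^2 + 2 * eps / (Hy eps M)^2 + 1 / Hy eps M + beta"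
definition aa :: "real \<Rightarrow> real \<Rightarrow> nat \<Rightarrow> nat \<Rightarrow> real" where
  "aa eps beta M N = 2 * eps / (Hx N)^2 + 2 * eps / (Hy eps M * hy eps M) + 1 / Hy eps M + beta"
definition ah :: "real \<Rightarrow> real \<Rightarrow> nat \<Rightarrow> nat \<Rightarrow> real" where
  "ah eps beta M N = 2 * eps / (Hx N)^2 + 2 * eps / (hy eps M)^2 + 1 / hy eps M + beta"

definition tridiag_toeplitz :: "nat \<Rightarrow> real \<Rightarrow> real \<Rightarrow> real mat" where
  "tridiag_toeplitz n a c = mat n n (\<lambda>(i,j). if i = j then a else if i = j + 1 \<or> j = i + 1 then c else 0)"

definition blk_tridiag :: "nat \<Rightarrow> nat \<Rightarrow> (nat \<Rightarrow> real mat) \<Rightarrow> (nat \<Rightarrow> real mat) \<Rightarrow> (nat \<Rightarrow> real mat) \<Rightarrow> real mat" where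
  "blk_tridiag n K D L U = mat (n * K) (n * K) (\<lambda>(p,q).
     let r = p div n; s = q div n; i = p mod n; l = q mod n in
     if r = s then D r $$ (i,l)
     else if r = s + 1 then L r $$ (i,l)
     else if s = r + 1 then U r $$ (i,l) else 0)"

definition matAH where "matAH eps beta M N = tridiag_toeplitz (nn N) (aH eps beta M N) (- eps / (Hx N)^2)"
definition matA  where "matA eps beta M N = tridiag_toeplitz (nn N) (aa eps beta M N) (- eps / (Hx N)^2)"
definition matAh where "matAh eps beta M N = tridiag_toeplitz (nn N) (ah eps beta M N) (- eps / (Hx N)^2)"
definition matCH where "matCH eps M N = dH eps M \<cdot>\<^sub>m 1\<^sub>m (nn N)"
definition matC  where "matC eps M N = dd eps M \<cdot>\<^sub>m 1\<^sub>m (nn N)"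
definition matCh where "matCh eps M N = dh eps M \<cdot>\<^sub>m 1\<^sub>m (nn N)"
definition matBH where "matBH eps M N = eH eps M \<cdot>\<^sub>m 1\<^sub>m (nn N)"
definition matB  where "matB eps M N = ee eps M \<cdot>\<^sub>m 1\<^sub>m (nn N)"
definition matBh where "matBh eps M N = eh eps M \<cdot>\<^sub>m 1\<^sub>m (nn N)"

text \<open>Global matrix calA (block rows 0..m-1: [C_H A_H B_H], row m: [C A B],
  rows m+1..2m: [C_h A_h B_h]); size n(2m+1) = (N-1)(M-1).\<close>
definition calA :: "real \<Rightarrow> real \<Rightarrow> nat \<Rightarrow> nat \<Rightarrow> real mat" where
  "calA eps beta M N = blk_tridiag (nn N) (2 * mm M + 1)
     (\<lambda>r. if r < mm M then matAH eps beta M N else if r = mm M then matA eps beta M N else matAh eps beta M N)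
     (\<lambda>r. if r < mm M then matCH eps M N else if r = mm M then matC eps M N else matCh eps M N)
     (\<lambda>r. if r < mm M then matBH eps M N else if r = mm M then matB eps M N else matBh eps M N)"

text \<open>A_1 = [[hat A_H, e_m (x) B_H],[e_m^T (x) C, A]].\<close>
definition matA1 :: "real \<Rightarrow> real \<Rightarrow> nat \<Rightarrow> nat \<Rightarrow> real mat" where
  "matA1 eps beta M N = blk_tridiag (nn N) (mm M + 1)
     (\<lambda>r. if r < mm M then matAH eps beta M N else matA eps beta M N)
     (\<lambda>r. if r < mm M then matCH eps M N else matC eps M N)
     (\<lambda>r. matBH eps M N)"

text \<open>A_2 = [[A, e_1^T (x) B],[e_1 (x) C_h, hat A_h]].\<close>
definition matA2 :: "real \<Rightarrow> real \<Rightarrow> nat \<Rightarrow> nat \<Rightarrow> real mat" where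
  "matA2 eps beta M N = blk_tridiag (nn N) (mm M + 1)
     (\<lambda>r. if r = 0 then matA eps beta M N else matAh eps beta M N)
     (\<lambda>r. matCh eps M N)
     (\<lambda>r. if r = 0 then matB eps M N else matBh eps M N)"

definition sz :: "nat \<Rightarrow> nat \<Rightarrow> nat" where "sz M N = nn N * (2 * mm M + 1)"
definition sub_sz :: "nat \<Rightarrow> nat \<Rightarrow> nat" where "sub_sz M N = nn N * (mm M + 1)"

definition matR1 :: "nat \<Rightarrow> nat \<Rightarrow> real mat" where
  "matR1 M N = mat (sub_sz M N) (sz M N) (\<lambda>(i,j). if j = i then 1 else 0)"
definition matR2 :: "nat \<Rightarrow> nat \<Rightarrow> real mat" where
  "matR2 M N = mat (sub_sz M N) (sz M N) (\<lambda>(i,j). if j = i + nn N * mm M then 1 else 0)"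

definition minv :: "real mat \<Rightarrow> real mat" where "minv A = the (mat_inverse A)"

definition matP :: "real mat \<Rightarrow> real mat \<Rightarrow> real mat \<Rightarrow> real mat" where
  "matP R Ai calA' = transpose_mat R * minv Ai * R * calA'"

definition matQ1 where
  "matQ1 eps beta M N = 1\<^sub>m (sz M N) - matP (matR1 M N) (matA1 eps beta M N) (calA eps beta M N)"
definition matQ2 where
  "matQ2 eps beta M N = 1\<^sub>m (sz M N) - matP (matR2 M N) (matA2 eps beta M N) (calA eps beta M N)"

definition T12 :: "real \<Rightarrow> real \<Rightarrow> nat \<Rightarrow> nat \<Rightarrow> real mat" where
  "T12 eps beta M N = matQ2 eps beta M N * matQ1 eps beta M N"
definition T21 :: "real \<Rightarrow> real \<Rightarrow> nat \<Rightarrow> nat \<Rightarrow> real mat" where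
  "T21 eps beta M N = matQ1 eps beta M N * matQ2 eps beta M N"

definition vec_inf_norm :: "real vec \<Rightarrow> real" where
  "vec_inf_norm v = Max (insert 0 ((\<lambda>i. \<bar>v $ i\<bar>) ` {..<dim_vec v}))"

definition mat_inf_norm :: "real mat \<Rightarrow> real" where
  "mat_inf_norm A = Max (insert 0 ((\<lambda>i. \<Sum>j<dim_col A. \<bar>A $$ (i,j)\<bar>) ` {..<dim_row A}))"

primrec schwarz_iter :: "real mat \<Rightarrow> real vec \<Rightarrow> real vec \<Rightarrow> nat \<Rightarrow> real vec" where
  "schwarz_iter T v x0 0 = x0"
| "schwarz_iter T v x0 (Suc k) = T *\<^sub>v schwarz_iter T v x0 k + v"

end

theory Submission
  imports Defs "Jordan_Normal_Form.Determinant"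
begin


section \<open>Norm facts\<close>

lemma vec_norm_ge: "i < dim_vec v \<Longrightarrow> \<bar>v $ i\<bar> \<le> vec_inf_norm v"
  unfolding vec_inf_norm_def by (intro Max_ge) auto

lemma vec_norm_nonneg: "0 \<le> vec_inf_norm v"
  unfolding vec_inf_norm_def by (intro Max_ge) auto

lemma vec_norm_le: assumes "0 \<le> c" "\<And>i. i < dim_vec v \<Longrightarrow> \<bar>v $ i\<bar> \<le> c"
  shows "vec_inf_norm v \<le> c"
  unfolding vec_inf_norm_def using assms by (subst Max_le_iff) auto

lemma vec_norm_pos: assumes "v \<in> carrier_vec n" "v \<noteq> 0\<^sub>v n" shows "0 < vec_inf_norm v"
proof -
  obtain i where i: "i < n" "v $ i \<noteq> 0" using assms by (metis carrier_vecD eq_vecI index_zero_vec(1,2))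
  have "0 < \<bar>v $ i\<bar>" using i by simp
  also have "\<dots> \<le> vec_inf_norm v" using i assms by (intro vec_norm_ge) auto
  finally show ?thesis .
qed

lemma mat_norm_ge: "i < dim_row A \<Longrightarrow> (\<Sum>j<dim_col A. \<bar>A $$ (i,j)\<bar>) \<le> mat_inf_norm A"
  unfolding mat_inf_norm_def by (intro Max_ge) auto

lemma mat_norm_nonneg: "0 \<le> mat_inf_norm A"
  unfolding mat_inf_norm_def by (intro Max_ge) auto

lemma mat_norm_le: assumes "0 \<le> c" "\<And>i. i < dim_row A \<Longrightarrow> (\<Sum>j<dim_col A. \<bar>A $$ (i,j)\<bar>) \<le> c"
  shows "mat_inf_norm A \<le> c"
  unfolding mat_inf_norm_def using assms by (subst Max_le_iff) auto

lemma row_scalar: "i < dim_row A \<Longrightarrow> dim_vec v = dim_col A \<Longrightarrow>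
   row A i \<bullet> v = (\<Sum>j<dim_col A. A $$ (i,j) * v $ j)"
  by (simp add: scalar_prod_def row_def lessThan_atLeast0)

lemma mult_vec_entry: "i < dim_row A \<Longrightarrow> dim_vec v = dim_col A \<Longrightarrow>
   (A *\<^sub>v v) $ i = (\<Sum>j<dim_col A. A $$ (i,j) * v $ j)"
  by (simp add: row_scalar)

lemma mat_vec_norm: assumes "dim_vec v = dim_col A"
  shows "vec_inf_norm (A *\<^sub>v v) \<le> mat_inf_norm A * vec_inf_norm v"
proof (rule vec_norm_le)
  show "0 \<le> mat_inf_norm A * vec_inf_norm v" by (simp add: mat_norm_nonneg vec_norm_nonneg)
  fix i assume "i < dim_vec (A *\<^sub>v v)"
  hence i: "i < dim_row A" by simp
  have "\<bar>(A *\<^sub>v v) $ i\<bar> = \<bar>\<Sum>j<dim_col A. A $$ (i,j) * v $ j\<bar>" using i assms by (simp add: row_scalar)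
  also have "\<dots> \<le> (\<Sum>j<dim_col A. \<bar>A $$ (i,j)\<bar> * vec_inf_norm v)"
    by (rule order.trans[OF sum_abs sum_mono]) (use assms vec_norm_ge in \<open>auto simp: abs_mult intro: mult_left_mono\<close>)
  also have "\<dots> = (\<Sum>j<dim_col A. \<bar>A $$ (i,j)\<bar>) * vec_inf_norm v" by (simp add: sum_distrib_right)
  also have "\<dots> \<le> mat_inf_norm A * vec_inf_norm v" using i by (intro mult_right_mono mat_norm_ge vec_norm_nonneg)
  finally show "\<bar>(A *\<^sub>v v) $ i\<bar> \<le> mat_inf_norm A * vec_inf_norm v" .
qed

lemma mat_norm_from_vec: assumes "0 \<le> c"
  and "\<And>y. y \<in> carrier_vec (dim_col A) \<Longrightarrow> vec_inf_norm (A *\<^sub>v y) \<le> c * vec_inf_norm y"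
  shows "mat_inf_norm A \<le> c"
proof (rule mat_norm_le[OF assms(1)])
  fix i assume i: "i < dim_row A"
  define y where "y = vec (dim_col A) (\<lambda>j. sgn (A $$ (i,j)))"
  have yc: "y \<in> carrier_vec (dim_col A)" by (simp add: y_def)
  have "vec_inf_norm y \<le> 1" by (rule vec_norm_le) (auto simp: y_def sgn_real_def)
  have "(\<Sum>j<dim_col A. \<bar>A $$ (i,j)\<bar>) = (A *\<^sub>v y) $ i"
    using i by (simp add: row_scalar y_def, intro sum.cong) (auto simp: sgn_real_def)
  also have "\<dots> \<le> \<bar>(A *\<^sub>v y) $ i\<bar>" by simp
  also have "\<dots> \<le> vec_inf_norm (A *\<^sub>v y)" using i by (intro vec_norm_ge) simp
  also have "\<dots> \<le> c * vec_inf_norm y" using assms(2) yc by blast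
  also have "\<dots> \<le> c" using \<open>vec_inf_norm y \<le> 1\<close> assms(1) by (simp add: mult_left_le)
  finally show "(\<Sum>j<dim_col A. \<bar>A $$ (i,j)\<bar>) \<le> c" .
qed

lemma minv_props: assumes A: "A \<in> carrier_mat n n"
  and inj: "\<And>v. v \<in> carrier_vec n \<Longrightarrow> A *\<^sub>v v = 0\<^sub>v n \<Longrightarrow> v = 0\<^sub>v n"
  shows "A * minv A = 1\<^sub>m n \<and> minv A * A = 1\<^sub>m n \<and> minv A \<in> carrier_mat n n"
proof -
  have "det A \<noteq> 0" using det_0_iff_vec_prod_zero_field[OF A] inj by auto
  from det_non_zero_imp_unit[OF A this, of "()"]
  have "mat_inverse A \<noteq> None" using mat_inverse(1)[OF A, of "()"] by auto
  then obtain B where "mat_inverse A = Some B" by auto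
  thus ?thesis using mat_inverse(2)[OF A] by (simp add: minv_def)
qed

section \<open>Maximum principle\<close>

lemma max_principle:
  fixes A :: "real mat"
  assumes A: "A \<in> carrier_mat n n"
  and off: "\<And>i j. i < n \<Longrightarrow> j < n \<Longrightarrow> i \<noteq> j \<Longrightarrow> A $$ (i,j) \<le> 0"
  and psi: "psi \<in> carrier_vec n" "\<And>i. i < n \<Longrightarrow> 0 < psi $ i" "\<And>i. i < n \<Longrightarrow> 0 < (A *\<^sub>v psi) $ i"
  and w: "w \<in> carrier_vec n" "\<And>i. i < n \<Longrightarrow> 0 \<le> (A *\<^sub>v w) $ i"
  shows "\<And>i. i < n \<Longrightarrow> 0 \<le> w $ i"
proof (rule ccontr)
  fix i0 assume i0: "i0 < n" "\<not> 0 \<le> w $ i0"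
  define f where "f j = w $ j / psi $ j" for j
  have ne: "f ` {..<n} \<noteq> {}" using i0 by auto
  obtain i where i: "i < n" "f i = Min (f ` {..<n})" using Min_in[OF _ ne] by auto
  define t where "t = f i"
  have tmin: "t \<le> f j" if "j < n" for j using that by (simp add: t_def i(2))
  have "f i0 < 0" using i0 psi(2)[OF i0(1)] by (simp add: f_def divide_neg_pos)
  hence tneg: "t < 0" using tmin[OF i0(1)] by simp
  have z: "0 \<le> w $ j - t * psi $ j" if "j < n" for j
    using tmin[OF that] psi(2)[OF that] by (simp add: f_def pos_le_divide_eq)
  have zi: "w $ i - t * psi $ i = 0" using psi(2)[OF i(1)] by (simp add: t_def f_def)
  have "(\<Sum>j<n. A $$ (i,j) * (w $ j - t * psi $ j)) \<le> 0"
  proof (rule sum_nonpos)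
    fix j assume "j \<in> {..<n}" hence j: "j < n" by simp
    show "A $$ (i,j) * (w $ j - t * psi $ j) \<le> 0"
    proof (cases "j = i")
      case True thus ?thesis using zi by simp
    next
      case False thus ?thesis using off[OF i(1) j] z[OF j] by (simp add: mult_nonpos_nonneg)
    qed
  qed
  moreover have "(\<Sum>j<n. A $$ (i,j) * (w $ j - t * psi $ j)) = (A *\<^sub>v w) $ i - t * (A *\<^sub>v psi) $ i"
    using A w psi i by (simp add: row_scalar algebra_simps sum_subtractf sum_distrib_left)
  moreover have "0 < (A *\<^sub>v w) $ i - t * (A *\<^sub>v psi) $ i"
    using w(2)[OF i(1)] mult_neg_pos[OF tneg psi(3)[OF i(1)]] by linarith
  ultimately show False by linarith
qed



definition stm :: "nat \<Rightarrow> nat \<Rightarrow> real \<Rightarrow> (nat\<Rightarrow>real) \<Rightarrow> (nat\<Rightarrow>real) \<Rightarrow> (nat\<Rightarrow>real) \<Rightarrow> real mat" where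
 "stm n K al a c u = mat (n*K) (n*K) (\<lambda>(p,q).
    (if q = p then a (p div n) else 0)
  + (if 0 < p mod n \<and> q = p - 1 then - al else 0)
  + (if Suc (p mod n) < n \<and> q = Suc p then - al else 0)
  + (if 0 < p div n \<and> q = p - n then c (p div n) else 0)
  + (if Suc (p div n) < K \<and> q = p + n then u (p div n) else 0))"

lemma stm_carrier: "stm n K al a c u \<in> carrier_mat (n*K) (n*K)"
  by (simp add: stm_def)

lemma uniq_dm: fixes n X Y X' Y' :: nat
  assumes "Y < n" "Y' < n" "X*n + Y = X'*n + Y'" shows "X = X' \<and> Y = Y'"
proof -
  have "X = (X*n+Y) div n" using assms(1) by simp
  also have "\<dots> = (X'*n+Y') div n" using assms(3) by simp
  also have "\<dots> = X'" using assms(2) by simp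
  finally have 1: "X = X'" .
  have "Y = (X*n+Y) mod n" using assms(1) by simp
  also have "\<dots> = (X'*n+Y') mod n" using assms(3) by simp
  also have "\<dots> = Y'" using assms(2) by simp
  finally show ?thesis using 1 by simp
qed

lemma key_idx: fixes n r s i l :: nat assumes il: "i < n" "l < n"
  shows "(s*n+l = r*n+i \<longleftrightarrow> s = r \<and> l = i)"
    and "0 < i \<Longrightarrow> (s*n+l = r*n+i - 1 \<longleftrightarrow> s = r \<and> Suc l = i)"
    and "Suc i < n \<Longrightarrow> (s*n+l = Suc (r*n+i) \<longleftrightarrow> s = r \<and> l = Suc i)"
    and "0 < r \<Longrightarrow> (s*n+l = r*n+i - n \<longleftrightarrow> Suc s = r \<and> l = i)"
    and "(s*n+l = r*n+i+n \<longleftrightarrow> s = Suc r \<and> l = i)"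
proof -
  show "(s*n+l = r*n+i \<longleftrightarrow> s = r \<and> l = i)" using uniq_dm[OF il(2,1)] by auto
  show "0 < i \<Longrightarrow> (s*n+l = r*n+i - 1 \<longleftrightarrow> s = r \<and> Suc l = i)"
  proof -
    assume "0 < i"
    hence "r*n+i - 1 = r*n + (i - 1)" by simp
    thus ?thesis using uniq_dm[OF il(2), of "i - 1" s r] il \<open>0<i\<close> by auto
  qed
  show "Suc i < n \<Longrightarrow> (s*n+l = Suc (r*n+i) \<longleftrightarrow> s = r \<and> l = Suc i)"
  proof -
    assume "Suc i < n"
    have "Suc (r*n+i) = r*n + Suc i" by simp
    thus ?thesis using uniq_dm[OF il(2) \<open>Suc i < n\<close>, of s r] by auto
  qed
  show "0 < r \<Longrightarrow> (s*n+l = r*n+i - n \<longleftrightarrow> Suc s = r \<and> l = i)"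
  proof -
    assume "0 < r"
    then obtain r' where r': "r = Suc r'" by (cases r) auto
    have "r*n+i - n = r'*n + i" by (simp add: r')
    thus ?thesis using uniq_dm[OF il(2,1), of s r'] r' by auto
  qed
  show "(s*n+l = r*n+i+n \<longleftrightarrow> s = Suc r \<and> l = i)"
  proof -
    have "r*n+i+n = Suc r*n + i" by simp
    thus ?thesis using uniq_dm[OF il(2,1), of s "Suc r"] by auto
  qed
qed

lemma blk_stm:
  assumes n: "0 < n"
  and D: "\<And>r i l. r < K \<Longrightarrow> i < n \<Longrightarrow> l < n \<Longrightarrow> D r $$ (i,l) = (if i = l then a r else if i = l+1 \<or> l = i+1 then -al else 0)"
  and L: "\<And>r i l. 0 < r \<Longrightarrow> r < K \<Longrightarrow> i < n \<Longrightarrow> l < n \<Longrightarrow> L r $$ (i,l) = (if i = l then c r else 0)"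
  and U: "\<And>r i l. Suc r < K \<Longrightarrow> i < n \<Longrightarrow> l < n \<Longrightarrow> U r $$ (i,l) = (if i = l then u r else 0)"
  shows "blk_tridiag n K D L U = stm n K al a c u"
proof (rule eq_matI)
  show "dim_row (blk_tridiag n K D L U) = dim_row (stm n K al a c u)"
       "dim_col (blk_tridiag n K D L U) = dim_col (stm n K al a c u)"
    by (simp_all add: blk_tridiag_def stm_def)
  fix p q assume "p < dim_row (stm n K al a c u)" "q < dim_col (stm n K al a c u)"
  hence pq: "p < n*K" "q < n*K" by (simp_all add: stm_def)
  define r i s l where "r = p div n" "i = p mod n" "s = q div n" "l = q mod n"
  have il: "i < n" "l < n" using n by (simp_all add: r_i_s_l_def)
  have p: "p = r*n+i" and q: "q = s*n+l" by (simp_all add: r_i_s_l_def)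
  have lhs: "blk_tridiag n K D L U $$ (p,q) = (if r = s then D r $$ (i,l)
     else if r = s + 1 then L r $$ (i,l)
     else if s = r + 1 then U r $$ (i,l) else 0)"
    using pq by (simp add: blk_tridiag_def r_i_s_l_def Let_def)
  have rhs: "stm n K al a c u $$ (p,q) =
    (if q = p then a r else 0)
  + (if 0 < i \<and> q = p - 1 then - al else 0)
  + (if Suc i < n \<and> q = Suc p then - al else 0)
  + (if 0 < r \<and> q = p - n then c r else 0)
  + (if Suc r < K \<and> q = p + n then u r else 0)"
    using pq by (simp add: stm_def r_i_s_l_def)
  note k = key_idx[OF il]
  have sK: "s < K" using pq n by (simp add: r_i_s_l_def div_less_iff_less_mult mult.commute)
  have rK: "r < K" using pq n by (simp add: r_i_s_l_def div_less_iff_less_mult mult.commute)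
  have e1: "(q = p) = (s = r \<and> l = i)"
  proof -
    have "(q = p) = (s*n+l = r*n+i)" by (simp only: p q)
    then show ?thesis using k(1) by simp
  qed
  have e2: "(0 < i \<and> q = p - 1) = (s = r \<and> Suc l = i)"
  proof (cases "0 < i")
    case True
    have "(q = p - 1) = (s*n+l = r*n+i - 1)" by (simp only: p q)
    then show ?thesis using k(2)[OF True] True by simp
  qed auto
  have e3: "(Suc i < n \<and> q = Suc p) = (s = r \<and> l = Suc i)"
  proof (cases "Suc i < n")
    case True
    have "(q = Suc p) = (s*n+l = Suc (r*n+i))" by (simp only: p q)
    then show ?thesis using k(3)[OF True] True by simp
  qed (use il in auto)
  have e4: "(0 < r \<and> q = p - n) = (Suc s = r \<and> l = i)"
  proof (cases "0 < r")
    case True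
    have "(q = p - n) = (s*n+l = r*n+i - n)" by (simp only: p q)
    then show ?thesis using k(4)[OF True] True by simp
  qed auto
  have e5: "(Suc r < K \<and> q = p + n) = (s = Suc r \<and> l = i)"
  proof -
    have "(q = p + n) = (s*n+l = r*n+i+n)" by (simp only: p q)
    then show ?thesis using k(5) sK by auto
  qed
  have "(if r = s then D r $$ (i,l)
     else if r = s + 1 then L r $$ (i,l)
     else if s = r + 1 then U r $$ (i,l) else 0) =
    (if s = r \<and> l = i then a r else 0)
  + (if s = r \<and> Suc l = i then - al else 0)
  + (if s = r \<and> l = Suc i then - al else 0)
  + (if Suc s = r \<and> l = i then c r else 0)
  + (if s = Suc r \<and> l = i then u r else 0)" (is "?L = ?R")
  proof (cases "r = s")
    case True thus ?thesis using D[OF rK il] by auto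
  next
    case F1: False
    show ?thesis
    proof (cases "r = Suc s")
      case True thus ?thesis using L[OF _ rK il] by auto
    next
      case F2: False
      show ?thesis
      proof (cases "s = Suc r")
        case True thus ?thesis using U[OF _ il] sK F1 F2 by auto
      qed (use F1 F2 in auto)
    qed
  qed
  thus "blk_tridiag n K D L U $$ (p,q) = stm n K al a c u $$ (p,q)"
    unfolding lhs rhs e1 e2 e3 e4 e5 .
qed



lemma delta_sum: fixes N t :: nat assumes "C \<Longrightarrow> t < N"
  shows "(\<Sum>q<N. (if C \<and> q = t then z else 0) * (g q :: real)) = (if C then z * g t else 0)"
proof (cases C)
  case True
  have "(\<Sum>q<N. (if C \<and> q = t then z else 0) * g q) = (\<Sum>q<N. if q = t then z * g q else 0)"
    using True by (intro sum.cong) auto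
  also have "\<dots> = z * g t" using assms True by (subst sum.delta[OF finite_lessThan]) simp
  finally show ?thesis using True by simp
qed simp

lemma idx_bounds: fixes p n K :: nat assumes "p < n*K"
  shows "Suc (p mod n) < n \<Longrightarrow> Suc p < n*K" and "Suc (p div n) < K \<Longrightarrow> p + n < n*K"
proof -
  have n: "0 < n" using assms by (cases n) auto
  have pd: "p = p div n * n + p mod n" by simp
  have dK: "p div n < K" using assms n by (simp add: div_less_iff_less_mult mult.commute)
  show "Suc (p mod n) < n \<Longrightarrow> Suc p < n*K"
  proof -
    assume a: "Suc (p mod n) < n"
    have "Suc p < p div n * n + n" using a pd by linarith
    also have "\<dots> = Suc (p div n) * n" by simp
    also have "\<dots> \<le> K * n" using dK by (intro mult_right_mono) auto
    finally show ?thesis by (simp add: mult.commute)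
  qed
  show "Suc (p div n) < K \<Longrightarrow> p + n < n*K"
  proof -
    assume a: "Suc (p div n) < K"
    have "p + n < p div n * n + n + n" using pd n by (metis add_less_mono1 mod_less_divisor nat_add_left_cancel_less)
    also have "\<dots> = Suc (Suc (p div n)) * n" by simp
    also have "\<dots> \<le> K * n" using a by (intro mult_right_mono) auto
    finally show ?thesis by (simp add: mult.commute)
  qed
qed

lemma stm_mult: assumes v: "v \<in> carrier_vec (n*K)" and p: "p < n*K"
  shows "(stm n K al a c u *\<^sub>v v) $ p = a (p div n) * v$p
     + (if 0 < p mod n then -al * v$(p-1) else 0)
     + (if Suc (p mod n) < n then -al * v$(Suc p) else 0)
     + (if 0 < p div n then c (p div n) * v$(p-n) else 0)
     + (if Suc (p div n) < K then u (p div n) * v$(p+n) else 0)"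
proof -
  let ?N = "n*K"
  have "(stm n K al a c u *\<^sub>v v) $ p = (\<Sum>q<?N. stm n K al a c u $$ (p,q) * v $ q)"
    using v p mult_vec_entry[of p "stm n K al a c u" v] by (simp add: stm_carrier[THEN carrier_matD(1)] stm_carrier[THEN carrier_matD(2)])
  also have "\<dots> = (\<Sum>q<?N.
      (if True \<and> q = p then a (p div n) else 0) * v$q
    + (if 0 < p mod n \<and> q = p - 1 then - al else 0) * v$q
    + (if Suc (p mod n) < n \<and> q = Suc p then - al else 0) * v$q
    + (if 0 < p div n \<and> q = p - n then c (p div n) else 0) * v$q
    + (if Suc (p div n) < K \<and> q = p + n then u (p div n) else 0) * v$q)"
    using p by (intro sum.cong refl) (simp add: stm_def distrib_right)
  also have "\<dots> = a (p div n) * v$p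
     + (if 0 < p mod n then -al * v$(p-1) else 0)
     + (if Suc (p mod n) < n then -al * v$(Suc p) else 0)
     + (if 0 < p div n then c (p div n) * v$(p-n) else 0)
     + (if Suc (p div n) < K then u (p div n) * v$(p+n) else 0)"
    unfolding sum.distrib
    apply (subst delta_sum, use p in simp)
    apply (subst delta_sum, use p in simp)
    apply (subst delta_sum, use idx_bounds[OF p] in simp)
    apply (subst delta_sum, use p in simp)
    apply (subst delta_sum, use idx_bounds[OF p] in simp)
    by simp
  finally show ?thesis .
qed



lemma dm_split: fixes n r j :: nat assumes "j < n" shows "(r*n+j) mod n = j \<and> (r*n+j) div n = r"
  using assms by simp

lemma idx_facts: fixes p n :: nat assumes n: "0 < n"
  shows "0 < p mod n \<Longrightarrow> (p-1) mod n = p mod n - 1 \<and> (p-1) div n = p div n"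
    and "Suc (p mod n) < n \<Longrightarrow> Suc p mod n = Suc (p mod n) \<and> Suc p div n = p div n"
    and "0 < p div n \<Longrightarrow> (p-n) mod n = p mod n \<and> (p-n) div n = p div n - 1"
    and "(p+n) mod n = p mod n \<and> (p+n) div n = Suc (p div n)"
proof -
  define r i where "r = p div n" "i = p mod n"
  have p: "p = r*n + i" and i: "i < n" using n by (simp_all add: r_i_def)
  show "0 < p mod n \<Longrightarrow> (p-1) mod n = p mod n - 1 \<and> (p-1) div n = p div n"
  proof -
    assume "0 < p mod n" hence "0 < i" by (simp add: r_i_def)
    have e: "p - 1 = r*n + (i - 1)" using p \<open>0<i\<close> by simp
    show ?thesis unfolding e r_i_def[symmetric] by (rule dm_split) (use i in simp)
  qed
  show "Suc (p mod n) < n \<Longrightarrow> Suc p mod n = Suc (p mod n) \<and> Suc p div n = p div n"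
  proof -
    assume "Suc (p mod n) < n" hence si: "Suc i < n" by (simp add: r_i_def)
    have e: "Suc p = r*n + Suc i" using p by simp
    show ?thesis unfolding e r_i_def[symmetric] by (rule dm_split) (use si in simp)
  qed
  show "0 < p div n \<Longrightarrow> (p-n) mod n = p mod n \<and> (p-n) div n = p div n - 1"
  proof -
    assume "0 < p div n" hence "0 < r" by (simp add: r_i_def)
    then obtain r' where r': "r = Suc r'" by (cases r) auto
    have e: "p - n = r'*n + i" using p r' by simp
    have "(p - n) mod n = i \<and> (p - n) div n = r'" unfolding e by (rule dm_split) (use i in simp)
    thus ?thesis using r' by (simp add: r_i_def)
  qed
  show "(p+n) mod n = p mod n \<and> (p+n) div n = Suc (p div n)"
    using n by simp
qed

definition SC :: "nat \<Rightarrow> nat \<Rightarrow> real \<Rightarrow> (nat\<Rightarrow>real) \<Rightarrow> (nat\<Rightarrow>real) \<Rightarrow> (nat\<Rightarrow>real) \<Rightarrow> bool" where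
  "SC n K al a c u \<longleftrightarrow> 0 < n \<and> 0 < al \<and> (\<forall>r<K. c r \<le> 0 \<and> u r \<le> 0 \<and> 2 * al \<le> a r + c r + u r)"

lemma dim_stm[simp]: "dim_row (stm n K al a c u) = n*K" "dim_col (stm n K al a c u) = n*K"
  by (simp_all add: stm_def)

lemma stm_off: assumes "SC n K al a c u" "p < n*K" "q < n*K" "p \<noteq> q"
  shows "stm n K al a c u $$ (p,q) \<le> 0"
proof -
  have n: "0 < n" using assms(1) by (simp add: SC_def)
  have "p div n < K" using assms(2) n by (simp add: div_less_iff_less_mult mult.commute)
  hence cu: "c (p div n) \<le> 0" "u (p div n) \<le> 0" "0 < al" using assms(1) by (auto simp: SC_def)
  show ?thesis using assms(2-4) cu by (auto simp: stm_def)
qed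

definition psiv :: "nat \<Rightarrow> nat \<Rightarrow> real vec" where
  "psiv n K = vec (n*K) (\<lambda>p. real n + real (p mod n) * (real n - 1 - real (p mod n)))"

lemma psiv_pos: assumes "0 < n" "p < n*K" shows "0 < psiv n K $ p"
proof -
  have "p mod n + 1 \<le> n" using mod_less_divisor[OF assms(1), of p] by linarith
  hence "real (p mod n) + 1 \<le> real n" by (metis of_nat_1 of_nat_add of_nat_le_iff)
  hence "real (p mod n) \<le> real n - 1" by linarith
  hence "0 \<le> real (p mod n) * (real n - 1 - real (p mod n))" by simp
  thus ?thesis using assms by (simp add: psiv_def)
qed

lemma stm_psi: assumes sc: "SC n K al a c u" and p: "p < n*K"
  shows "0 < (stm n K al a c u *\<^sub>v psiv n K) $ p"
proof -
  have n: "0 < n" and al: "0 < al" using sc by (simp_all add: SC_def)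
  define r i where "r = p div n" "i = p mod n"
  have rK: "r < K" using p n by (simp add: r_i_def div_less_iff_less_mult mult.commute)
  have cu: "c r \<le> 0" "u r \<le> 0" "2 * al \<le> a r + c r + u r" using sc rK by (auto simp: SC_def)
  define f where "f x = real n + x * (real n - 1 - x)" for x :: real
  have fnn: "0 \<le> f (real j)" if "j < n" for j
  proof -
    have "j + 1 \<le> n" using that by linarith
    hence "real j + 1 \<le> real n" by (metis of_nat_1 of_nat_add of_nat_le_iff)
    hence "real j \<le> real n - 1" by linarith
    thus ?thesis by (simp add: f_def)
  qed
  have ps: "psiv n K $ q = f (real (q mod n))" if "q < n*K" for q using that by (simp add: psiv_def f_def)
  have psic: "psiv n K \<in> carrier_vec (n*K)" by (simp add: psiv_def)
  have I1: "0 < i \<Longrightarrow> psiv n K $ (p-1) = f (real i - 1)"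
    using idx_facts(1)[OF n, of p] p ps[of "p-1"] by (simp add: r_i_def of_nat_diff)
  have I2: "Suc i < n \<Longrightarrow> psiv n K $ (Suc p) = f (real i + 1)"
    using idx_facts(2)[OF n, of p] idx_bounds(1)[OF p] ps[of "Suc p"] by (simp add: r_i_def add.commute)
  have I3: "0 < r \<Longrightarrow> psiv n K $ (p-n) = f (real i)"
    using idx_facts(3)[OF n, of p] p ps[of "p-n"] by (simp add: r_i_def)
  have I4: "Suc r < K \<Longrightarrow> psiv n K $ (p+n) = f (real i)"
    using idx_facts(4)[OF n, of p] idx_bounds(2)[OF p] ps[of "p+n"] by (simp add: r_i_def)
  have I0: "psiv n K $ p = f (real i)" using ps[OF p] by (simp add: r_i_def)
  have fi: "0 \<le> f (real i)" using fnn[of i] n by (simp add: r_i_def)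
  have iln: "i < n" using n by (simp add: r_i_def)
  have fm: "0 \<le> f (real i - 1)" if "0 < i"
  proof -
    have "real (i - 1) = real i - 1" using that by (simp add: of_nat_diff)
    thus ?thesis using fnn[of "i - 1"] iln by simp
  qed
  have fp: "Suc i < n \<Longrightarrow> 0 \<le> f (real i + 1)"
    using fnn[of "Suc i"] by (simp add: add.commute)
  have curv: "2 * f x - f (x - 1) - f (x + 1) = 2" for x by (simp add: f_def algebra_simps)
  have "(stm n K al a c u *\<^sub>v psiv n K) $ p = a r * f (real i)
     + (if 0 < i then -al * f (real i - 1) else 0)
     + (if Suc i < n then -al * f (real i + 1) else 0)
     + (if 0 < r then c r * f (real i) else 0)
     + (if Suc r < K then u r * f (real i) else 0)"
    unfolding stm_mult[OF psic p] r_i_def[symmetric] using I0 I1 I2 I3 I4 by simp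
  also have "\<dots> \<ge> (a r + c r + u r) * f (real i) - al * f (real i - 1) - al * f (real i + 1)"
  proof -
    have A: "(if 0 < r then c r * f (real i) else 0) \<ge> c r * f (real i)"
      using mult_nonpos_nonneg[OF cu(1) fi] by auto
    have B: "(if Suc r < K then u r * f (real i) else 0) \<ge> u r * f (real i)"
      using mult_nonpos_nonneg[OF cu(2) fi] by auto
    have C: "(if 0 < i then -al * f (real i - 1) else 0) \<ge> - al * f (real i - 1)"
    proof (cases "0 < i")
      case False hence "i = 0" by simp
      hence "f (real i - 1) = 0" by (simp add: f_def)
      thus ?thesis by simp
    qed simp
    have D: "(if Suc i < n then -al * f (real i + 1) else 0) \<ge> - al * f (real i + 1)"
    proof (cases "Suc i < n")
      case False hence "Suc i = n" using iln by simp
      hence "real n = real i + 1" by (metis of_nat_Suc add.commute)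
      hence "f (real i + 1) = 0" by (simp add: f_def algebra_simps)
      thus ?thesis by simp
    qed simp
    show ?thesis using A B C D by (simp add: algebra_simps)
  qed
  finally have "(stm n K al a c u *\<^sub>v psiv n K) $ p \<ge> (a r + c r + u r) * f (real i) - al * f (real i - 1) - al * f (real i + 1)" .
  moreover have "(a r + c r + u r) * f (real i) \<ge> 2 * al * f (real i)" using cu(3) fi by (simp add: mult_right_mono)
  moreover have "2 * al * f (real i) - al * f (real i - 1) - al * f (real i + 1) = 2 * al"
    using curv[of "real i"] by (simp add: algebra_simps)
  ultimately show ?thesis using al by linarith
qed

lemma stm_mp: assumes sc: "SC n K al a c u" and w: "w \<in> carrier_vec (n*K)"
  and nn: "\<And>p. p < n*K \<Longrightarrow> 0 \<le> (stm n K al a c u *\<^sub>v w) $ p"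
  and p: "p < n*K"
  shows "0 \<le> w $ p"
proof (rule max_principle[where A = "stm n K al a c u" and n = "n*K" and psi = "psiv n K" and w = w])
  show "stm n K al a c u \<in> carrier_mat (n*K) (n*K)" by (rule stm_carrier)
  show "psiv n K \<in> carrier_vec (n*K)" by (simp add: psiv_def)
  have n: "0 < n" using sc by (simp add: SC_def)
  show "\<And>i. i < n*K \<Longrightarrow> 0 < psiv n K $ i" by (rule psiv_pos[OF n])
  show "\<And>i. i < n*K \<Longrightarrow> 0 < (stm n K al a c u *\<^sub>v psiv n K) $ i" by (rule stm_psi[OF sc])
  show "\<And>i j. i < n*K \<Longrightarrow> j < n*K \<Longrightarrow> i \<noteq> j \<Longrightarrow> stm n K al a c u $$ (i,j) \<le> 0" by (rule stm_off[OF sc])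
qed (use w nn p in auto)

lemma stm_compare: assumes sc: "SC n K al a c u" and w: "w \<in> carrier_vec (n*K)" and phi: "phi \<in> carrier_vec (n*K)"
  and le: "\<And>p. p < n*K \<Longrightarrow> \<bar>(stm n K al a c u *\<^sub>v w) $ p\<bar> \<le> (stm n K al a c u *\<^sub>v phi) $ p"
  shows "\<And>p. p < n*K \<Longrightarrow> \<bar>w $ p\<bar> \<le> phi $ p"
proof -
  fix p assume p: "p < n*K"
  let ?S = "stm n K al a c u"
  have 1: "0 \<le> (phi - w) $ q" if "q < n*K" for q
  proof (rule stm_mp[OF sc _ _ that])
    show "phi - w \<in> carrier_vec (n*K)" using phi w by simp
    fix q assume q: "q < n*K"
    have "(?S *\<^sub>v (phi - w)) $ q = (?S *\<^sub>v phi) $ q - (?S *\<^sub>v w) $ q"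
      using mult_minus_distrib_mat_vec[OF stm_carrier phi w] q by simp
    thus "0 \<le> (?S *\<^sub>v (phi - w)) $ q" using le[OF q] by simp
  qed
  have 2: "0 \<le> (phi + w) $ q" if "q < n*K" for q
  proof (rule stm_mp[OF sc _ _ that])
    show "phi + w \<in> carrier_vec (n*K)" using phi w by simp
    fix q assume q: "q < n*K"
    have "(?S *\<^sub>v (phi + w)) $ q = (?S *\<^sub>v phi) $ q + (?S *\<^sub>v w) $ q"
      using mult_add_distrib_mat_vec[OF stm_carrier phi w] q by simp
    thus "0 \<le> (?S *\<^sub>v (phi + w)) $ q" using le[OF q] by simp
  qed
  show "\<bar>w $ p\<bar> \<le> phi $ p" using 1[OF p] 2[OF p] p phi w by auto
qed

lemma stm_inj: assumes sc: "SC n K al a c u" and w: "w \<in> carrier_vec (n*K)"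
  and z: "stm n K al a c u *\<^sub>v w = 0\<^sub>v (n*K)"
  shows "w = 0\<^sub>v (n*K)"
proof -
  have "\<bar>w $ p\<bar> \<le> 0\<^sub>v (n*K) $ p" if "p < n*K" for p
  proof (rule stm_compare[OF sc w _ _ that])
    fix q assume q: "q < n*K"
    have "(stm n K al a c u *\<^sub>v 0\<^sub>v (n*K)) $ q = 0" using q by (simp add: row_def)
    thus "\<bar>(stm n K al a c u *\<^sub>v w) $ q\<bar> \<le> (stm n K al a c u *\<^sub>v 0\<^sub>v (n*K)) $ q" using z q by simp
  qed simp
  thus ?thesis using w by (intro eq_vecI) auto
qed

lemma stm_minv: assumes sc: "SC n K al a c u"
  shows "stm n K al a c u * minv (stm n K al a c u) = 1\<^sub>m (n*K) \<and> minv (stm n K al a c u) * stm n K al a c u = 1\<^sub>m (n*K)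
    \<and> minv (stm n K al a c u) \<in> carrier_mat (n*K) (n*K)"
  by (rule minv_props[OF stm_carrier stm_inj[OF sc]])



lemma aux1: fixes H h D e :: real assumes "0 < H" "0 < h" "0 < D" "D = H + h"
  shows "(2*e/(H*h) + 1/H) + (- 2 * e / (H * D) - 1 / H) + (- 2 * e / (h * D)) = 0"
proof -
  have "(2*e/(H*h) + 1/H) + (- 2 * e / (H * D) - 1 / H) + (- 2 * e / (h * D)) = 2*e*(D - h - H)/(H*h*D)"
    using assms(1-3) by (simp add: field_simps)
  thus ?thesis using assms(4) by simp
qed
lemma aux2: fixes H E e r :: real assumes "0 < H" "0 < E" "E = e + H" "r = e / E"
  shows "(- e / H^2 - 1 / H) * r^2 + (2*e/H^2 + 1/H) * r + (- e / H^2) = 0"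
proof -
  have "(- e / H^2 - 1 / H) * r^2 + (2*e/H^2 + 1/H) * r + (- e / H^2) = 
        e * ( - (e + H) * e + (2*e + H) * E - E^2) / (H^2 * E^2)"
    using assms(1,2) unfolding assms(4) by (simp add: field_simps power2_eq_square)
  also have "- (e + H) * e + (2*e + H) * E - E^2 = 0" unfolding assms(3) by (simp add: algebra_simps power2_eq_square)
  finally show ?thesis by simp
qed
lemma aux3: fixes H E e r :: real assumes "0 < H" "0 < E" "E = e + H" "r = e / E"
  shows "(2*e/H^2 + 1/H) * r + (- e / H^2) = e^2 / (H^2 * E)"
proof -
  have "(2*e/H^2 + 1/H) * r + (- e / H^2) = e * ((2*e + H) - E) / (H^2 * E)"
    using assms(1,2) unfolding assms(4) by (simp add: field_simps power2_eq_square)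
  also have "(2*e + H) - E = e" unfolding assms(3) by simp
  finally show ?thesis by (simp add: power2_eq_square)
qed
locale shk =
  fixes eps beta :: real and M N :: nat
  assumes eps: "eps > 0" and beta: "beta \<ge> 0" and Mev: "even M" and M4: "M \<ge> 4" and N3: "N \<ge> 3"
begin

definition "n = nn N"
definition "m = mm M"
definition "al = eps / (Hx N)^2"
definition "H = Hy eps M"
definition "h = hy eps M"
definition "rho = eps / (eps + H)"
definition "yH = 2*eps/H^2 + 1/H"
definition "ym = 2*eps/(H*h) + 1/H"
definition "yh = 2*eps/h^2 + 1/h"

lemma n2: "n \<ge> 2" using N3 by (simp add: n_def nn_def)
lemma m1: "m \<ge> 1" using M4 by (simp add: m_def mm_def)

lemma tau_pos: "0 < tau_y eps M" and tau_le: "tau_y eps M \<le> 1/2"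
proof -
  have "0 < ln (real M)" using M4 by simp
  thus "0 < tau_y eps M" using eps by (simp add: tau_y_def)
  show "tau_y eps M \<le> 1/2" by (simp add: tau_y_def)
qed

lemma Mpos: "0 < real M" using M4 by simp

lemma H_pos: "0 < H" using tau_le Mpos by (simp add: H_def Hy_def)
lemma h_pos: "0 < h" using tau_pos Mpos by (simp add: h_def hy_def)
lemma h_le_H: "h \<le> H" using tau_le Mpos by (simp add: H_def h_def Hy_def hy_def divide_right_mono)
lemma al_pos: "0 < al" using eps N3 by (simp add: al_def Hx_def)

lemma rho_pos: "0 < rho" and rho_lt1: "rho < 1"
  using eps H_pos by (simp_all add: rho_def)

lemma aH_eq: "aH eps beta M N = 2*al + yH + beta"
  by (simp add: aH_def al_def yH_def H_def)
lemma aa_eq: "aa eps beta M N = 2*al + ym + beta"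
  by (simp add: aa_def al_def ym_def H_def h_def)
lemma ah_eq: "ah eps beta M N = 2*al + yh + beta"
  by (simp add: ah_def al_def yh_def h_def)

lemma sumH: "yH + dH eps M + eH eps M = 0"
  using H_pos by (simp add: yH_def dH_def eH_def H_def[symmetric] field_simps power2_eq_square)
lemma summ: "ym + dd eps M + ee eps M = 0"
  using aux1[OF H_pos h_pos _ refl, of eps] H_pos h_pos
  by (simp add: ym_def dd_def ee_def H_def[symmetric] h_def[symmetric])
lemma sumh: "yh + dh eps M + eh eps M = 0"
  using h_pos by (simp add: yh_def dh_def eh_def h_def[symmetric] field_simps power2_eq_square)

lemma neg_coefs: "dH eps M < 0" "dd eps M < 0" "dh eps M < 0" "eH eps M < 0" "ee eps M < 0" "eh eps M < 0"
proof -
  have p: "- eps / H^2 < 0" "0 < 1/H" "- eps / h^2 < 0" "0 < 1/h" "- 2 * eps / (H * (H + h)) < 0" "- 2 * eps / (h * (H + h)) < 0"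
    using H_pos h_pos eps by (simp_all add: divide_neg_pos)
  show "dH eps M < 0" "dd eps M < 0" "dh eps M < 0" "eH eps M < 0" "ee eps M < 0" "eh eps M < 0"
    unfolding dH_def dd_def dh_def eH_def ee_def eh_def H_def[symmetric] h_def[symmetric] using p by linarith+
qed

lemma rho_eq: "dH eps M * rho^2 + yH * rho + eH eps M = 0"
  using aux2[OF H_pos _ refl refl, of eps] H_pos eps
  by (simp add: dH_def eH_def yH_def rho_def H_def[symmetric])
lemma rho_ge: "0 \<le> yH * rho + eH eps M"
proof -
  have "yH * rho + eH eps M = eps^2 / (H^2 * (eps + H))"
    using aux3[OF H_pos _ refl refl, of eps] H_pos eps
    by (simp add: eH_def yH_def rho_def H_def[symmetric])
  thus ?thesis using H_pos eps by simp
qed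

end


lemma tt_entry: "i < n \<Longrightarrow> l < n \<Longrightarrow> tridiag_toeplitz n a c $$ (i,l) = (if i = l then a else if i = l+1 \<or> l = i+1 then c else 0)"
  by (simp add: tridiag_toeplitz_def)

lemma sm_entry: "i < n \<Longrightarrow> l < n \<Longrightarrow> (d \<cdot>\<^sub>m 1\<^sub>m n) $$ (i,l) = (if i = l then d else (0::real))"
  by simp

context shk begin

definition "aC r = (if r < m then aH eps beta M N else if r = m then aa eps beta M N else ah eps beta M N)"
definition "cC r = (if r < m then dH eps M else if r = m then dd eps M else dh eps M)"
definition "uC r = (if r < m then eH eps M else if r = m then ee eps M else eh eps M)"
definition "a1 r = (if r < m then aH eps beta M N else aa eps beta M N)"
definition "c1 r = (if r < m then dH eps M else dd eps M)"
definition "u1 r = (if r < m then eH eps M else 0)"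
definition "a2 r = (if r = 0 then aa eps beta M N else ah eps beta M N)"
definition "c2 r = (if r = 0 then 0 else dh eps M)"
definition "u2 r = (if r = 0 then ee eps M else eh eps M)"

lemma offd: "- eps / (Hx N)^2 = - al" by (simp add: al_def)

lemma calA_eq: "calA eps beta M N = stm n (2*m+1) al aC cC uC"
  unfolding calA_def n_def[symmetric] m_def[symmetric]
  by (rule blk_stm) (use n2 in \<open>auto simp: tt_entry matAH_def matA_def matAh_def matCH_def matC_def matCh_def
      matBH_def matB_def matBh_def aC_def cC_def uC_def offd al_def n_def[symmetric]\<close>)

lemma A1_eq: "matA1 eps beta M N = stm n (m+1) al a1 c1 u1"
  unfolding matA1_def n_def[symmetric] m_def[symmetric]
  by (rule blk_stm) (use n2 in \<open>auto simp: tt_entry matAH_def matA_def matCH_def matC_def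
      matBH_def a1_def c1_def u1_def offd al_def n_def[symmetric]\<close>)

lemma A2_eq: "matA2 eps beta M N = stm n (m+1) al a2 c2 u2"
  unfolding matA2_def n_def[symmetric] m_def[symmetric]
  by (rule blk_stm) (use n2 in \<open>auto simp: tt_entry matA_def matAh_def matCh_def
      matB_def matBh_def a2_def c2_def u2_def offd al_def n_def[symmetric]\<close>)

lemma y_nonneg: "0 \<le> ym + dd eps M" "0 \<le> ym + ee eps M" "0 \<le> yh + dh eps M"
  using summ sumh neg_coefs by linarith+

lemma SC_calA: "SC n (2*m+1) al aC cC uC"
  unfolding SC_def using n2 al_pos neg_coefs sumH summ sumh beta
  by (auto simp: aC_def cC_def uC_def aH_eq aa_eq ah_eq)

lemma SC_A1: "SC n (m+1) al a1 c1 u1"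
  unfolding SC_def using n2 al_pos neg_coefs sumH y_nonneg beta
  by (auto simp: a1_def c1_def u1_def aH_eq aa_eq)

lemma SC_A2: "SC n (m+1) al a2 c2 u2"
  unfolding SC_def using n2 al_pos neg_coefs sumh y_nonneg beta
  by (auto simp: a2_def c2_def u2_def aa_eq ah_eq)

end


context shk begin

definition "S = n*(2*m+1)"
definition "s = n*(m+1)"

lemma sz_eq: "sz M N = S" by (simp add: sz_def S_def n_def m_def)
lemma sub_eq: "sub_sz M N = s" by (simp add: sub_sz_def s_def n_def m_def)
lemma S_split: "S = n*m + s" by (simp add: S_def s_def algebra_simps)
lemma s_le_S: "s \<le> S" by (simp add: S_split)

lemma R1_carrier: "matR1 M N \<in> carrier_mat s S" by (simp add: matR1_def sz_eq sub_eq)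
lemma R2_carrier: "matR2 M N \<in> carrier_mat s S" by (simp add: matR2_def sz_eq sub_eq)

lemma R1_mult: assumes y: "y \<in> carrier_vec S" shows "matR1 M N *\<^sub>v y = vec s (\<lambda>i. y $ i)"
proof (rule eq_vecI)
  fix i assume "i < dim_vec (vec s (\<lambda>i. y $ i))" hence i: "i < s" by simp
  have "(matR1 M N *\<^sub>v y) $ i = (\<Sum>j<S. (if j = i then 1 else 0) * y $ j)"
    using i y R1_carrier by (subst mult_vec_entry) (auto simp: matR1_def sz_eq sub_eq)
  also have "\<dots> = (\<Sum>j<S. if j = i then y $ j else 0)" by (intro sum.cong) auto
  also have "\<dots> = y $ i" using i s_le_S by (subst sum.delta[OF finite_lessThan]) auto
  finally show "(matR1 M N *\<^sub>v y) $ i = vec s (\<lambda>i. y $ i) $ i" using i by simp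
qed (use R1_carrier in auto)

lemma R1T_mult: assumes u: "u \<in> carrier_vec s" shows "transpose_mat (matR1 M N) *\<^sub>v u = vec S (\<lambda>j. if j < s then u $ j else 0)"
proof (rule eq_vecI)
  fix j assume "j < dim_vec (vec S (\<lambda>j. if j < s then u $ j else 0))" hence j: "j < S" by simp
  have "(transpose_mat (matR1 M N) *\<^sub>v u) $ j = (\<Sum>i<s. (if j = i then 1 else 0) * u $ i)"
    using j u R1_carrier by (subst mult_vec_entry) (auto simp: matR1_def sz_eq sub_eq)
  also have "\<dots> = (\<Sum>i<s. if i = j then u $ i else 0)" by (intro sum.cong) auto
  also have "\<dots> = (if j < s then u $ j else 0)" by (subst sum.delta[OF finite_lessThan]) auto
  finally show "(transpose_mat (matR1 M N) *\<^sub>v u) $ j = vec S (\<lambda>j. if j < s then u $ j else 0) $ j" using j by simp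
qed (use R1_carrier in auto)

lemma R2_mult: assumes y: "y \<in> carrier_vec S" shows "matR2 M N *\<^sub>v y = vec s (\<lambda>i. y $ (i + n*m))"
proof (rule eq_vecI)
  fix i assume "i < dim_vec (vec s (\<lambda>i. y $ (i + n*m)))" hence i: "i < s" by simp
  have "(matR2 M N *\<^sub>v y) $ i = (\<Sum>j<S. (if j = i + n*m then 1 else 0) * y $ j)"
    using i y R2_carrier by (subst mult_vec_entry) (auto simp: matR2_def sz_eq sub_eq n_def m_def)
  also have "\<dots> = (\<Sum>j<S. if j = i + n*m then y $ j else 0)" by (intro sum.cong) auto
  also have "\<dots> = y $ (i + n*m)" using i S_split by (subst sum.delta[OF finite_lessThan]) auto
  finally show "(matR2 M N *\<^sub>v y) $ i = vec s (\<lambda>i. y $ (i + n*m)) $ i" using i by simp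
qed (use R2_carrier in auto)

lemma R2T_mult: assumes u: "u \<in> carrier_vec s" shows "transpose_mat (matR2 M N) *\<^sub>v u = vec S (\<lambda>j. if n*m \<le> j then u $ (j - n*m) else 0)"
proof (rule eq_vecI)
  fix j assume "j < dim_vec (vec S (\<lambda>j. if n*m \<le> j then u $ (j - n*m) else 0))" hence j: "j < S" by simp
  have "(transpose_mat (matR2 M N) *\<^sub>v u) $ j = (\<Sum>i<s. (if j = i + n*m then 1 else 0) * u $ i)"
    using j u R2_carrier by (subst mult_vec_entry) (auto simp: matR2_def sz_eq sub_eq n_def m_def)
  also have "\<dots> = (\<Sum>i<s. if i = j - n*m then (if n*m \<le> j then u $ i else 0) else 0)" by (intro sum.cong) auto
  also have "\<dots> = (if n*m \<le> j then u $ (j - n*m) else 0)" using j S_split by (subst sum.delta[OF finite_lessThan]) auto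
  finally show "(transpose_mat (matR2 M N) *\<^sub>v u) $ j = vec S (\<lambda>j. if n*m \<le> j then u $ (j - n*m) else 0) $ j" using j by simp
qed (use R2_carrier in auto)

lemma calA_carrier: "calA eps beta M N \<in> carrier_mat S S" unfolding calA_eq S_def by (rule stm_carrier)
lemma A1_carrier: "matA1 eps beta M N \<in> carrier_mat s s" unfolding A1_eq s_def by (rule stm_carrier)
lemma A2_carrier: "matA2 eps beta M N \<in> carrier_mat s s" unfolding A2_eq s_def by (rule stm_carrier)

lemma A1_inv: "matA1 eps beta M N * minv (matA1 eps beta M N) = 1\<^sub>m s" "minv (matA1 eps beta M N) \<in> carrier_mat s s"
  using stm_minv[OF SC_A1] unfolding A1_eq s_def by auto
lemma A2_inv: "matA2 eps beta M N * minv (matA2 eps beta M N) = 1\<^sub>m s" "minv (matA2 eps beta M N) \<in> carrier_mat s s"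
  using stm_minv[OF SC_A2] unfolding A2_eq s_def by auto
lemma calA_inv: "minv (calA eps beta M N) \<in> carrier_mat S S"
  using stm_minv[OF SC_calA] unfolding calA_eq S_def by auto

lemma Q_generic: assumes R: "R \<in> carrier_mat s S" and Mi: "minv Ai \<in> carrier_mat s s" and y: "y \<in> carrier_vec S"
  shows "(1\<^sub>m S - matP R Ai (calA eps beta M N)) *\<^sub>v y = y - transpose_mat R *\<^sub>v (minv Ai *\<^sub>v (R *\<^sub>v (calA eps beta M N *\<^sub>v y)))"
    and "1\<^sub>m S - matP R Ai (calA eps beta M N) \<in> carrier_mat S S"
proof -
  have RT: "transpose_mat R \<in> carrier_mat S s" using R by simp
  have P: "matP R Ai (calA eps beta M N) \<in> carrier_mat S S"
    unfolding matP_def using RT Mi R calA_carrier by (intro mult_carrier_mat) auto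
  show "1\<^sub>m S - matP R Ai (calA eps beta M N) \<in> carrier_mat S S" using P by (rule minus_carrier_mat)
  have "matP R Ai (calA eps beta M N) *\<^sub>v y = transpose_mat R *\<^sub>v (minv Ai *\<^sub>v (R *\<^sub>v (calA eps beta M N *\<^sub>v y)))"
  proof -
    have c1: "transpose_mat R * minv Ai \<in> carrier_mat S s" using RT Mi by simp
    have c2: "transpose_mat R * minv Ai * R \<in> carrier_mat S S" using c1 R by simp
    have "matP R Ai (calA eps beta M N) *\<^sub>v y = (transpose_mat R * minv Ai * R) *\<^sub>v (calA eps beta M N *\<^sub>v y)"
      unfolding matP_def using c2 calA_carrier y by (rule assoc_mult_mat_vec)
    also have "\<dots> = (transpose_mat R * minv Ai) *\<^sub>v (R *\<^sub>v (calA eps beta M N *\<^sub>v y))"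
      using c1 R calA_carrier y by (intro assoc_mult_mat_vec) auto
    also have "\<dots> = transpose_mat R *\<^sub>v (minv Ai *\<^sub>v (R *\<^sub>v (calA eps beta M N *\<^sub>v y)))"
      using RT Mi R calA_carrier y by (intro assoc_mult_mat_vec) auto
    finally show ?thesis .
  qed
  moreover have "(1\<^sub>m S - matP R Ai (calA eps beta M N)) *\<^sub>v y = y - matP R Ai (calA eps beta M N) *\<^sub>v y"
    using P y by (subst minus_mult_distrib_mat_vec[of _ S S]) auto
  ultimately show "(1\<^sub>m S - matP R Ai (calA eps beta M N)) *\<^sub>v y = y - transpose_mat R *\<^sub>v (minv Ai *\<^sub>v (R *\<^sub>v (calA eps beta M N *\<^sub>v y)))" by simp
qed

lemma Q1_carrier: "matQ1 eps beta M N \<in> carrier_mat S S"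
  unfolding matQ1_def sz_eq using Q_generic(2)[OF R1_carrier A1_inv(2) zero_carrier_vec] .
lemma Q2_carrier: "matQ2 eps beta M N \<in> carrier_mat S S"
  unfolding matQ2_def sz_eq using Q_generic(2)[OF R2_carrier A2_inv(2) zero_carrier_vec] .

definition "U1 y = minv (matA1 eps beta M N) *\<^sub>v (matR1 M N *\<^sub>v (calA eps beta M N *\<^sub>v y))"
definition "U2 y = minv (matA2 eps beta M N) *\<^sub>v (matR2 M N *\<^sub>v (calA eps beta M N *\<^sub>v y))"

lemma U1_carrier: "y \<in> carrier_vec S \<Longrightarrow> U1 y \<in> carrier_vec s"
  unfolding U1_def using A1_inv(2) R1_carrier calA_carrier by auto
lemma U2_carrier: "y \<in> carrier_vec S \<Longrightarrow> U2 y \<in> carrier_vec s"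
  unfolding U2_def using A2_inv(2) R2_carrier calA_carrier by auto

lemma Q1_entry: assumes y: "y \<in> carrier_vec S" and p: "p < S"
  shows "(matQ1 eps beta M N *\<^sub>v y) $ p = y $ p - (if p < s then U1 y $ p else 0)"
proof -
  have "matQ1 eps beta M N *\<^sub>v y = y - transpose_mat (matR1 M N) *\<^sub>v U1 y"
    unfolding matQ1_def sz_eq U1_def using Q_generic(1)[OF R1_carrier A1_inv(2) y] by simp
  thus ?thesis using p y U1_carrier[OF y] by (simp add: R1T_mult)
qed

lemma Q2_entry: assumes y: "y \<in> carrier_vec S" and p: "p < S"
  shows "(matQ2 eps beta M N *\<^sub>v y) $ p = y $ p - (if n*m \<le> p then U2 y $ (p - n*m) else 0)"
proof -
  have "matQ2 eps beta M N *\<^sub>v y = y - transpose_mat (matR2 M N) *\<^sub>v U2 y"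
    unfolding matQ2_def sz_eq U2_def using Q_generic(1)[OF R2_carrier A2_inv(2) y] by simp
  thus ?thesis using p y U2_carrier[OF y] by (simp add: R2T_mult)
qed

lemma A1_U1: assumes y: "y \<in> carrier_vec S"
  shows "matA1 eps beta M N *\<^sub>v U1 y = matR1 M N *\<^sub>v (calA eps beta M N *\<^sub>v y)"
proof -
  have z: "matR1 M N *\<^sub>v (calA eps beta M N *\<^sub>v y) \<in> carrier_vec s" using R1_carrier calA_carrier y by auto
  have "matA1 eps beta M N *\<^sub>v U1 y = (matA1 eps beta M N * minv (matA1 eps beta M N)) *\<^sub>v (matR1 M N *\<^sub>v (calA eps beta M N *\<^sub>v y))"
    unfolding U1_def using A1_carrier A1_inv(2) z by (subst assoc_mult_mat_vec) auto
  also have "\<dots> = matR1 M N *\<^sub>v (calA eps beta M N *\<^sub>v y)" using A1_inv(1) z by simp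
  finally show ?thesis .
qed

lemma A2_U2: assumes y: "y \<in> carrier_vec S"
  shows "matA2 eps beta M N *\<^sub>v U2 y = matR2 M N *\<^sub>v (calA eps beta M N *\<^sub>v y)"
proof -
  have z: "matR2 M N *\<^sub>v (calA eps beta M N *\<^sub>v y) \<in> carrier_vec s" using R2_carrier calA_carrier y by auto
  have "matA2 eps beta M N *\<^sub>v U2 y = (matA2 eps beta M N * minv (matA2 eps beta M N)) *\<^sub>v (matR2 M N *\<^sub>v (calA eps beta M N *\<^sub>v y))"
    unfolding U2_def using A2_carrier A2_inv(2) z by (subst assoc_mult_mat_vec) auto
  also have "\<dots> = matR2 M N *\<^sub>v (calA eps beta M N *\<^sub>v y)" using A2_inv(1) z by simp
  finally show ?thesis .
qed

end


lemma stm_mult_bc: assumes n: "0 < n" and p: "p < n*K"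
  shows "(stm n K al a c u *\<^sub>v vec (n*K) (\<lambda>j. g (j div n))) $ p =
     (a (p div n) - (if 0 < p mod n then al else 0) - (if Suc (p mod n) < n then al else 0)) * g (p div n)
     + (if 0 < p div n then c (p div n) * g (p div n - 1) else 0)
     + (if Suc (p div n) < K then u (p div n) * g (Suc (p div n)) else 0)"
proof -
  have v: "vec (n*K) (\<lambda>j. g (j div n)) \<in> carrier_vec (n*K)" by simp
  have 1: "vec (n*K) (\<lambda>j. g (j div n)) $ (p - 1) = g (p div n)" if a: "0 < p mod n"
  proof -
    have d: "(p-1) div n = p div n" using idx_facts(1)[OF n a] by blast
    have "p - 1 < n*K" using p by linarith
    hence "vec (n*K) (\<lambda>j. g (j div n)) $ (p - 1) = g ((p-1) div n)" by (rule index_vec)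
    thus ?thesis unfolding d .
  qed
  have 2: "vec (n*K) (\<lambda>j. g (j div n)) $ (Suc p) = g (p div n)" if a: "Suc (p mod n) < n"
  proof -
    have d: "Suc p div n = p div n" using idx_facts(2)[OF n a] by blast
    have "Suc p < n*K" using idx_bounds(1)[OF p a] .
    hence "vec (n*K) (\<lambda>j. g (j div n)) $ (Suc p) = g (Suc p div n)" by (rule index_vec)
    thus ?thesis unfolding d .
  qed
  have 3: "vec (n*K) (\<lambda>j. g (j div n)) $ (p - n) = g (p div n - 1)" if a: "0 < p div n"
  proof -
    have d: "(p-n) div n = p div n - 1" using idx_facts(3)[OF n a] by blast
    have "p - n < n*K" using p n by linarith
    hence "vec (n*K) (\<lambda>j. g (j div n)) $ (p - n) = g ((p-n) div n)" by (rule index_vec)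
    thus ?thesis unfolding d .
  qed
  have 4: "vec (n*K) (\<lambda>j. g (j div n)) $ (p + n) = g (Suc (p div n))" if a: "Suc (p div n) < K"
  proof -
    have d: "(p+n) div n = Suc (p div n)" using idx_facts(4)[OF n] by blast
    have "p + n < n*K" using idx_bounds(2)[OF p a] .
    hence "vec (n*K) (\<lambda>j. g (j div n)) $ (p + n) = g ((p+n) div n)" by (rule index_vec)
    thus ?thesis unfolding d .
  qed
  show ?thesis unfolding stm_mult[OF v p] using 1 2 3 4 p by (simp add: algebra_simps)
qed

context shk begin

lemma s_blocks: assumes "q < s" shows "q div n \<le> m"
proof -
  have "q < (m+1)*n" using assms by (simp add: s_def mult.commute)
  hence "q div n < m + 1" using n2 by (subst div_less_iff_less_mult) auto
  thus ?thesis by simp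
qed

definition "W1 y = vec s (\<lambda>q. y $ q - U1 y $ q)"

lemma A1_W1: assumes y: "y \<in> carrier_vec S" and q: "q < s"
  shows "(matA1 eps beta M N *\<^sub>v W1 y) $ q = (if q div n = m then - ee eps M * y $ (q+n) else 0)"
proof -
  have n: "0 < n" using n2 by simp
  define v where "v = vec s (\<lambda>i. y $ i)"
  have vc: "v \<in> carrier_vec (n*(m+1))" by (simp add: v_def s_def)
  have W: "W1 y = v - U1 y" using U1_carrier[OF y] by (intro eq_vecI) (auto simp: W1_def v_def)
  have "matA1 eps beta M N *\<^sub>v W1 y = matA1 eps beta M N *\<^sub>v v - matA1 eps beta M N *\<^sub>v U1 y"
    unfolding W using A1_carrier vc U1_carrier[OF y] by (subst mult_minus_distrib_mat_vec[of _ s s]) (auto simp: s_def)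
  hence "(matA1 eps beta M N *\<^sub>v W1 y) $ q = (matA1 eps beta M N *\<^sub>v v) $ q - (calA eps beta M N *\<^sub>v y) $ q"
    using q A1_U1[OF y] R1_mult[of "calA eps beta M N *\<^sub>v y"] calA_carrier y A1_carrier by simp
  moreover
  define r i where "r = q div n" "i = q mod n"
  have rm: "r \<le> m" using s_blocks[OF q] by (simp add: r_i_def)
  have qs: "q < n*(m+1)" using q by (simp add: s_def)
  have qS: "q < n*(2*m+1)" using q s_le_S by (simp add: S_def)
  have yc: "y \<in> carrier_vec (n*(2*m+1))" using y by (simp add: S_def)
  have A: "(matA1 eps beta M N *\<^sub>v v) $ q = a1 r * y$q
     + (if 0 < i then -al * y$(q-1) else 0)
     + (if Suc i < n then -al * y$(Suc q) else 0)
     + (if 0 < r then c1 r * y$(q-n) else 0)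
     + (if Suc r < m+1 then u1 r * y$(q+n) else 0)"
    unfolding A1_eq stm_mult[OF vc qs] r_i_def[symmetric]
    using q idx_bounds[OF qs] by (simp add: v_def s_def r_i_def)
  have B: "(calA eps beta M N *\<^sub>v y) $ q = aC r * y$q
     + (if 0 < i then -al * y$(q-1) else 0)
     + (if Suc i < n then -al * y$(Suc q) else 0)
     + (if 0 < r then cC r * y$(q-n) else 0)
     + (if Suc r < 2*m+1 then uC r * y$(q+n) else 0)"
    unfolding calA_eq stm_mult[OF yc qS] r_i_def[symmetric] by simp
  have co: "a1 r = aC r" "c1 r = cC r" using rm by (auto simp: a1_def aC_def c1_def cC_def)
  have "(matA1 eps beta M N *\<^sub>v v) $ q - (calA eps beta M N *\<^sub>v y) $ q = (if r = m then - ee eps M * y $ (q+n) else 0)"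
    unfolding A B co using rm m1 by (auto simp: u1_def uC_def)
  ultimately show ?thesis by (simp add: r_i_def)
qed

end

context shk begin

lemma W1_carrier: "W1 y \<in> carrier_vec s" by (simp add: W1_def)

lemma W1_bound: assumes y: "y \<in> carrier_vec S"
  and Yb: "\<And>j. s \<le> j \<Longrightarrow> j < s + n \<Longrightarrow> \<bar>y $ j\<bar> \<le> Y" and q: "q < s"
  shows "\<bar>W1 y $ q\<bar> \<le> Y * rho^(m - q div n)"
proof -
  have n: "0 < n" using n2 by simp
  have Y0: "0 \<le> Y" using Yb[of s] n by force
  define g where "g r = Y * rho^(m - r)" for r
  define phi where "phi = vec (n*(m+1)) (\<lambda>j. g (j div n))"
  have phic: "phi \<in> carrier_vec (n*(m+1))" by (simp add: phi_def)
  have wc: "W1 y \<in> carrier_vec (n*(m+1))" by (simp add: W1_def s_def)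
  have "\<bar>W1 y $ q\<bar> \<le> phi $ q"
  proof (rule stm_compare[OF SC_A1 wc phic])
    show "q < n*(m+1)" using q by (simp add: s_def)
    fix p assume p: "p < n*(m+1)"
    hence ps: "p < s" by (simp add: s_def)
    define r where "r = p div n"
    have rm: "r \<le> m" using s_blocks[OF ps] by (simp add: r_def)
    have L: "(stm n (m+1) al a1 c1 u1 *\<^sub>v W1 y) $ p = (if r = m then - ee eps M * y $ (p+n) else 0)"
      using A1_W1[OF y ps] unfolding A1_eq r_def .
    have R: "(stm n (m+1) al a1 c1 u1 *\<^sub>v phi) $ p =
       (a1 r - (if 0 < p mod n then al else 0) - (if Suc (p mod n) < n then al else 0)) * g r
     + (if 0 < r then c1 r * g (r - 1) else 0)
     + (if Suc r < m+1 then u1 r * g (Suc r) else 0)"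
      unfolding phi_def stm_mult_bc[OF n p] r_def ..
    have gr0: "0 \<le> g r" using Y0 rho_pos by (simp add: g_def)
    have x1: "(a1 r - (if 0 < p mod n then al else 0) - (if Suc (p mod n) < n then al else 0)) * g r \<ge> (a1 r - 2*al) * g r"
      using gr0 al_pos by (intro mult_right_mono) auto
    show "\<bar>(stm n (m+1) al a1 c1 u1 *\<^sub>v W1 y) $ p\<bar> \<le> (stm n (m+1) al a1 c1 u1 *\<^sub>v phi) $ p"
    proof (cases "r < m")
      case True
      define k where "k = m - Suc r"
      have mr: "m - r = Suc k" using True by (simp add: k_def)
      have g1: "g r = Y * rho^k * rho" by (simp add: g_def mr mult.assoc mult.commute)
      have g2: "g (Suc r) = Y * rho^k" by (simp add: g_def k_def)
      have g3: "g (r - 1) = Y * rho^k * rho^2" if "0 < r"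
      proof -
        have "m - (r - 1) = Suc (Suc k)" using True that by (simp add: k_def)
        thus ?thesis by (simp add: g_def power2_eq_square algebra_simps)
      qed
      have co: "a1 r - 2*al = yH + beta" "c1 r = dH eps M" "u1 r = eH eps M" using True by (auto simp: a1_def c1_def u1_def aH_eq)
      have Yk: "0 \<le> Y * rho^k" using Y0 rho_pos by simp
      let ?X = "(if 0 < r then dH eps M * (Y * rho^k * rho^2) else 0)"
      let ?X' = "(if 0 < r then dH eps M * rho^2 else 0)"
      have h1: "(a1 r - (if 0 < p mod n then al else 0) - (if Suc (p mod n) < n then al else 0)) * g r \<ge> (yH + beta) * (Y * rho^k * rho)"
        using x1 unfolding co(1) g1 .
      have h2: "(if 0 < r then c1 r * g (r - 1) else 0) = ?X"
      proof (cases "0 < r")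
        case True thus ?thesis using g3[OF True] co(2) by simp
      qed simp
      have h3: "(if Suc r < m+1 then u1 r * g (Suc r) else 0) = eH eps M * (Y * rho^k)" using True by (simp add: co g2)
      have c1: "(stm n (m+1) al a1 c1 u1 *\<^sub>v phi) $ p \<ge> (yH + beta) * (Y * rho^k * rho) + ?X + eH eps M * (Y * rho^k)"
        unfolding R h2 h3 using h1 by linarith
      have c2: "(yH + beta) * (Y * rho^k * rho) + ?X + eH eps M * (Y * rho^k) = (Y * rho^k) * (yH * rho + ?X' + eH eps M) + beta * (Y * rho^k * rho)"
        by (cases "0 < r") (simp_all add: algebra_simps)
      have c3: "0 \<le> beta * (Y * rho^k * rho)"
        using beta Yk rho_pos by simp
      have c4: "0 \<le> (Y * rho^k) * (yH * rho + ?X' + eH eps M)"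
      proof (cases "0 < r")
        case True thus ?thesis using rho_eq by (simp add: algebra_simps)
      next
        case False thus ?thesis using rho_ge Yk by simp
      qed
      have "0 \<le> (stm n (m+1) al a1 c1 u1 *\<^sub>v phi) $ p" using c1 c2 c3 c4 by linarith
      thus ?thesis unfolding L using True by simp
    next
      case False
      hence r: "r = m" using rm by simp
      have g1: "g r = Y" using r by (simp add: g_def)
      have g3: "g (r - 1) = Y * rho" using r m1 by (simp add: g_def)
      have co: "a1 r - 2*al = ym + beta" "c1 r = dd eps M" using r by (auto simp: a1_def c1_def aa_eq)
      have h1: "(a1 r - (if 0 < p mod n then al else 0) - (if Suc (p mod n) < n then al else 0)) * g r \<ge> (ym + beta) * Y"
        using x1 unfolding co(1) g1 .
      have h2: "(if 0 < r then c1 r * g (r - 1) else 0) = dd eps M * (Y * rho)"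
      proof -
        have "0 < r" using r m1 by simp
        thus ?thesis using co(2) g3 by simp
      qed
      have h3: "(if Suc r < m+1 then u1 r * g (Suc r) else 0) = 0" using r by simp
      have c1: "(stm n (m+1) al a1 c1 u1 *\<^sub>v phi) $ p \<ge> (ym + beta) * Y + dd eps M * (Y * rho)"
        unfolding R h2 h3 using h1 by linarith
      have c2: "(ym + beta) * Y + dd eps M * (Y * rho) = Y * (- ee eps M) + Y * beta + Y * (dd eps M * (rho - 1))"
      proof -
        have ymv: "ym = - dd eps M - ee eps M" using summ by linarith
        show ?thesis by (simp add: ymv algebra_simps)
      qed
      have c3: "0 \<le> dd eps M * (rho - 1)" using neg_coefs(2) rho_lt1 by (simp add: mult_nonpos_nonpos)
      have c4: "0 \<le> Y * (dd eps M * (rho - 1))" "0 \<le> Y * beta" using c3 Y0 beta by simp_all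
      have Rge: "(stm n (m+1) al a1 c1 u1 *\<^sub>v phi) $ p \<ge> - ee eps M * Y" using c1 c2 c4 by (simp add: algebra_simps)
      have pn: "s \<le> p + n" "p + n < s + n"
      proof -
        have e: "p div n * n + p mod n = p" by (rule div_mult_mod_eq)
        have pm: "p div n = m" using r by (simp add: r_def)
        have "p = m * n + p mod n" using e unfolding pm by linarith
        moreover have "p mod n < n" using n by simp
        ultimately show "s \<le> p + n" "p + n < s + n" by (simp_all add: s_def algebra_simps)
      qed
      have "\<bar>- ee eps M * y $ (p+n)\<bar> = - ee eps M * \<bar>y $ (p+n)\<bar>" using neg_coefs(5) by (simp add: abs_mult)
      also have "\<dots> \<le> - ee eps M * Y" using Yb[OF pn] neg_coefs(5) by (simp add: mult_left_mono)
      finally show ?thesis unfolding L using r Rge by simp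
    qed
  qed
  thus ?thesis using q by (simp add: phi_def g_def s_def)
qed

end

context shk begin

definition "W2 y = vec s (\<lambda>q. y $ (q + n*m) - U2 y $ q)"

lemma W2_carrier: "W2 y \<in> carrier_vec s" by (simp add: W2_def)

lemma A2_W2: assumes y: "y \<in> carrier_vec S" and q: "q < s"
  shows "(matA2 eps beta M N *\<^sub>v W2 y) $ q = (if q div n = 0 then - dd eps M * y $ (q + n*m - n) else 0)"
proof -
  have n: "0 < n" using n2 by simp
  define v where "v = vec s (\<lambda>i. y $ (i + n*m))"
  have vc: "v \<in> carrier_vec (n*(m+1))" by (simp add: v_def s_def)
  have W: "W2 y = v - U2 y" using U2_carrier[OF y] by (intro eq_vecI) (auto simp: W2_def v_def)
  have "matA2 eps beta M N *\<^sub>v W2 y = matA2 eps beta M N *\<^sub>v v - matA2 eps beta M N *\<^sub>v U2 y"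
    unfolding W using A2_carrier vc U2_carrier[OF y] by (subst mult_minus_distrib_mat_vec[of _ s s]) (auto simp: s_def)
  hence "(matA2 eps beta M N *\<^sub>v W2 y) $ q = (matA2 eps beta M N *\<^sub>v v) $ q - (calA eps beta M N *\<^sub>v y) $ (q + n*m)"
    using q A2_U2[OF y] R2_mult[of "calA eps beta M N *\<^sub>v y"] calA_carrier y A2_carrier by simp
  moreover
  define r i where "r = q div n" "i = q mod n"
  define p where "p = q + n*m"
  have rm: "r \<le> m" using s_blocks[OF q] by (simp add: r_i_def)
  have qs: "q < n*(m+1)" using q by (simp add: s_def)
  have pS: "p < n*(2*m+1)" using q S_split by (simp add: S_def p_def)
  have pr: "p div n = r + m" "p mod n = i" using n by (simp_all add: p_def r_i_def)
  have yc: "y \<in> carrier_vec (n*(2*m+1))" using y by (simp add: S_def)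
  have A: "(matA2 eps beta M N *\<^sub>v v) $ q = a2 r * y$p
     + (if 0 < i then -al * y$(p-1) else 0)
     + (if Suc i < n then -al * y$(Suc p) else 0)
     + (if 0 < r then c2 r * y$(p-n) else 0)
     + (if Suc r < m+1 then u2 r * y$(p+n) else 0)"
  proof -
    have e1: "0 < i \<Longrightarrow> v $ (q - 1) = y $ (p - 1)"
      using q by (simp add: v_def p_def r_i_def) (metis Nat.add_diff_assoc2 One_nat_def less_eq_Suc_le mod_less_eq_dividend order.trans)
    have e2: "Suc i < n \<Longrightarrow> v $ (Suc q) = y $ (Suc p)"
      using idx_bounds(1)[OF qs] by (simp add: v_def p_def r_i_def s_def)
    have e3: "0 < r \<Longrightarrow> v $ (q - n) = y $ (p - n)"
    proof -
      assume "0 < r"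
      hence "n \<le> q" using n by (simp add: r_i_def div_greater_zero_iff)
      hence "q - n + n*m = q + n*m - n" by simp
      thus ?thesis using q \<open>n \<le> q\<close> by (simp add: v_def p_def)
    qed
    have e4: "Suc r < m+1 \<Longrightarrow> v $ (q + n) = y $ (p + n)"
      using idx_bounds(2)[OF qs] by (simp add: v_def p_def r_i_def s_def algebra_simps)
    have e0: "v $ q = y $ p" using q by (simp add: v_def p_def)
    show ?thesis unfolding A2_eq stm_mult[OF vc qs] r_i_def[symmetric]
      using e0 e1 e2 e3 e4 by simp
  qed
  have B: "(calA eps beta M N *\<^sub>v y) $ p = aC (r+m) * y$p
     + (if 0 < i then -al * y$(p-1) else 0)
     + (if Suc i < n then -al * y$(Suc p) else 0)
     + (if 0 < r + m then cC (r+m) * y$(p-n) else 0)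
     + (if Suc (r+m) < 2*m+1 then uC (r+m) * y$(p+n) else 0)"
    unfolding calA_eq stm_mult[OF yc pS] pr ..
  have co: "a2 r = aC (r+m)" "Suc r < m+1 \<Longrightarrow> u2 r = uC (r+m)" "0 < r \<Longrightarrow> c2 r = cC (r+m)"
    using rm by (auto simp: a2_def aC_def u2_def uC_def c2_def cC_def)
  have "(matA2 eps beta M N *\<^sub>v v) $ q - (calA eps beta M N *\<^sub>v y) $ p = (if r = 0 then - dd eps M * y $ (p - n) else 0)"
    unfolding A B using co m1 by (auto simp: cC_def)
  ultimately show ?thesis by (simp add: r_i_def p_def)
qed

lemma W2_bound: assumes y: "y \<in> carrier_vec S"
  and Yb: "\<And>j. n*m - n \<le> j \<Longrightarrow> j < n*m \<Longrightarrow> \<bar>y $ j\<bar> \<le> Y" and q: "q < s"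
  shows "\<bar>W2 y $ q\<bar> \<le> Y"
proof -
  have n: "0 < n" using n2 by simp
  have nm: "n \<le> n*m" using m1 by simp
  have Y0: "0 \<le> Y" using Yb[of "n*m - 1"] n nm by force
  define g where "g (r::nat) = Y" for r
  define phi where "phi = vec (n*(m+1)) (\<lambda>j. g (j div n))"
  have phic: "phi \<in> carrier_vec (n*(m+1))" by (simp add: phi_def)
  have wc: "W2 y \<in> carrier_vec (n*(m+1))" by (simp add: W2_def s_def)
  have "\<bar>W2 y $ q\<bar> \<le> phi $ q"
  proof (rule stm_compare[OF SC_A2 wc phic])
    show "q < n*(m+1)" using q by (simp add: s_def)
    fix p assume p: "p < n*(m+1)"
    hence ps: "p < s" by (simp add: s_def)
    define r where "r = p div n"
    have rm: "r \<le> m" using s_blocks[OF ps] by (simp add: r_def)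
    have L: "(stm n (m+1) al a2 c2 u2 *\<^sub>v W2 y) $ p = (if r = 0 then - dd eps M * y $ (p + n*m - n) else 0)"
      using A2_W2[OF y ps] unfolding A2_eq r_def .
    have R: "(stm n (m+1) al a2 c2 u2 *\<^sub>v phi) $ p =
       (a2 r - (if 0 < p mod n then al else 0) - (if Suc (p mod n) < n then al else 0)) * Y
     + (if 0 < r then c2 r * Y else 0)
     + (if Suc r < m+1 then u2 r * Y else 0)"
      unfolding phi_def stm_mult_bc[OF n p] r_def by (simp add: g_def)
    have x1: "(a2 r - (if 0 < p mod n then al else 0) - (if Suc (p mod n) < n then al else 0)) * Y \<ge> (a2 r - 2*al) * Y"
      using Y0 al_pos by (intro mult_right_mono) auto
    show "\<bar>(stm n (m+1) al a2 c2 u2 *\<^sub>v W2 y) $ p\<bar> \<le> (stm n (m+1) al a2 c2 u2 *\<^sub>v phi) $ p"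
    proof (cases "r = 0")
      case True
      have co: "a2 r - 2*al = ym + beta" "u2 r = ee eps M" using True by (auto simp: a2_def u2_def aa_eq)
      have h3: "(if Suc r < m+1 then u2 r * Y else 0) = ee eps M * Y" using True m1 co by simp
      have c1: "(stm n (m+1) al a2 c2 u2 *\<^sub>v phi) $ p \<ge> (ym + beta) * Y + ee eps M * Y"
        unfolding R h3 using x1 co True by simp
      have ymv: "ym = - dd eps M - ee eps M" using summ by linarith
      have Rge: "(stm n (m+1) al a2 c2 u2 *\<^sub>v phi) $ p \<ge> - dd eps M * Y"
      proof -
        have "(ym + beta) * Y + ee eps M * Y = - dd eps M * Y + beta * Y" by (simp add: ymv algebra_simps)
        moreover have "0 \<le> beta * Y" using beta Y0 by simp
        ultimately show ?thesis using c1 by linarith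
      qed
      have pn: "n*m - n \<le> p + n*m - n" "p + n*m - n < n*m"
      proof -
        have "p < n" using True n by (simp add: r_def div_eq_0_iff)
        thus "n*m - n \<le> p + n*m - n" "p + n*m - n < n*m" using nm by arith+
      qed
      have "\<bar>- dd eps M * y $ (p + n*m - n)\<bar> = - dd eps M * \<bar>y $ (p + n*m - n)\<bar>" using neg_coefs(2) by (simp add: abs_mult)
      also have "\<dots> \<le> - dd eps M * Y" using Yb[OF pn] neg_coefs(2) by (simp add: mult_left_mono)
      finally show ?thesis unfolding L using True Rge by simp
    next
      case False
      have co: "a2 r - 2*al = yh + beta" "c2 r = dh eps M" "u2 r = eh eps M" using False by (auto simp: a2_def c2_def u2_def ah_eq)
      have h2: "(if 0 < r then c2 r * Y else 0) = dh eps M * Y" using False co by simp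
      have h3: "(if Suc r < m+1 then u2 r * Y else 0) \<ge> eh eps M * Y"
        using co neg_coefs(6) Y0 by (simp add: mult_nonpos_nonneg)
      have c1: "(stm n (m+1) al a2 c2 u2 *\<^sub>v phi) $ p \<ge> (yh + beta) * Y + dh eps M * Y + eh eps M * Y"
        unfolding R h2 using x1 co h3 by simp
      have yhv: "yh = - dh eps M - eh eps M" using sumh by linarith
      have "0 \<le> (stm n (m+1) al a2 c2 u2 *\<^sub>v phi) $ p"
      proof -
        have "(yh + beta) * Y + dh eps M * Y + eh eps M * Y = beta * Y" by (simp add: yhv algebra_simps)
        moreover have "0 \<le> beta * Y" using beta Y0 by simp
        ultimately show ?thesis using c1 by linarith
      qed
      thus ?thesis unfolding L using False by simp
    qed
  qed
  thus ?thesis using q by (simp add: phi_def g_def s_def)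
qed

end

context shk begin

abbreviation "Q1 \<equiv> matQ1 eps beta M N"
abbreviation "Q2 \<equiv> matQ2 eps beta M N"

lemma Q1_keep: "y \<in> carrier_vec S \<Longrightarrow> p < S \<Longrightarrow> s \<le> p \<Longrightarrow> (Q1 *\<^sub>v y) $ p = y $ p"
  by (simp add: Q1_entry)

lemma Q1_bnd: assumes y: "y \<in> carrier_vec S" and Yb: "\<And>j. s \<le> j \<Longrightarrow> j < s + n \<Longrightarrow> \<bar>y $ j\<bar> \<le> Y"
  and p: "p < s" shows "\<bar>(Q1 *\<^sub>v y) $ p\<bar> \<le> Y * rho^(m - p div n)"
proof -
  have "(Q1 *\<^sub>v y) $ p = W1 y $ p" using p s_le_S y by (simp add: Q1_entry W1_def)
  thus ?thesis using W1_bound[OF y Yb p] by simp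
qed

lemma Q2_keep: "y \<in> carrier_vec S \<Longrightarrow> p < n*m \<Longrightarrow> (Q2 *\<^sub>v y) $ p = y $ p"
  using S_split by (simp add: Q2_entry)

lemma Q2_bnd: assumes y: "y \<in> carrier_vec S" and Yb: "\<And>j. n*m - n \<le> j \<Longrightarrow> j < n*m \<Longrightarrow> \<bar>y $ j\<bar> \<le> Y"
  and p: "p < S" "n*m \<le> p" shows "\<bar>(Q2 *\<^sub>v y) $ p\<bar> \<le> Y"
proof -
  have ps: "p - n*m < s" using p S_split by simp
  have "(Q2 *\<^sub>v y) $ p = W2 y $ (p - n*m)" using p ps y by (simp add: Q2_entry W2_def)
  thus ?thesis using W2_bound[OF y Yb ps] by simp
qed

lemma rho_pow_le1: "rho^k \<le> 1" using rho_pos rho_lt1 by (simp add: power_le_one)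
lemma rho_pow_le: "1 \<le> k \<Longrightarrow> rho^k \<le> rho"
  using rho_pos rho_lt1 by (metis order.order_iff_strict power_decreasing power_one_right less_imp_le)

lemma blk_m1: assumes "n*m - n \<le> j" "j < n*m" shows "j < s" "m - j div n = 1"
proof -
  show "j < s" using assms(2) by (simp add: s_def)
  have n: "0 < n" using n2 by simp
  have "j div n < m" using assms(2) n by (simp add: div_less_iff_less_mult mult.commute)
  moreover have "m - 1 \<le> j div n"
  proof -
    have "(m - 1) * n \<le> j" using assms(1) by (simp add: algebra_simps diff_mult_distrib)
    hence "(m - 1) * n div n \<le> j div n" by (rule div_le_mono)
    thus ?thesis using n by simp
  qed
  ultimately show "m - j div n = 1" by linarith
qed

lemma Q1_carrier_vec: "y \<in> carrier_vec S \<Longrightarrow> Q1 *\<^sub>v y \<in> carrier_vec S" using Q1_carrier by simp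
lemma Q2_carrier_vec: "y \<in> carrier_vec S \<Longrightarrow> Q2 *\<^sub>v y \<in> carrier_vec S" using Q2_carrier by simp

text \<open>Key estimate: after applying Q1, the Q2-then-Q1 sweep contracts by rho.\<close>
lemma Q1Q2_contract: assumes x: "x \<in> carrier_vec S" and Yb: "\<And>j. n*m - n \<le> j \<Longrightarrow> j < n*m \<Longrightarrow> \<bar>x $ j\<bar> \<le> Y"
  and Y0: "0 \<le> Y"
  shows "vec_inf_norm (Q1 *\<^sub>v (Q2 *\<^sub>v x)) \<le> Y"
proof (rule vec_norm_le[OF Y0])
  let ?z = "Q2 *\<^sub>v x"
  have z: "?z \<in> carrier_vec S" using Q2_carrier_vec[OF x] .
  have zb: "\<bar>?z $ j\<bar> \<le> Y" if "s \<le> j" "j < s + n" for j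
  proof -
    have nm: "n \<le> n*m" using m1 by simp
    have "s + n \<le> S" using S_split nm by linarith
    moreover have "n*m \<le> s" by (simp add: s_def)
    ultimately show ?thesis using Q2_bnd[OF x Yb] that by simp
  qed
  fix p assume "p < dim_vec (Q1 *\<^sub>v ?z)" hence p: "p < S" using Q1_carrier by simp
  show "\<bar>(Q1 *\<^sub>v ?z) $ p\<bar> \<le> Y"
  proof (cases "p < s")
    case True
    have "\<bar>(Q1 *\<^sub>v ?z) $ p\<bar> \<le> Y * rho^(m - p div n)" by (rule Q1_bnd[OF z zb True])
    also have "\<dots> \<le> Y" using Y0 rho_pow_le1 by (simp add: mult_left_le)
    finally show ?thesis .
  next
    case False
    hence "(Q1 *\<^sub>v ?z) $ p = ?z $ p" using Q1_keep[OF z p] by simp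
    moreover have "n*m \<le> p" using False by (simp add: s_def)
    ultimately show ?thesis using Q2_bnd[OF x Yb p] by simp
  qed
qed

lemma T21_range: assumes u: "u \<in> carrier_vec S"
  shows "vec_inf_norm (Q1 *\<^sub>v (Q2 *\<^sub>v (Q1 *\<^sub>v u))) \<le> rho * vec_inf_norm (Q1 *\<^sub>v u)"
proof -
  let ?x = "Q1 *\<^sub>v u"
  have x: "?x \<in> carrier_vec S" by (rule Q1_carrier_vec[OF u])
  have ub: "\<bar>u $ j\<bar> \<le> vec_inf_norm ?x" if "s \<le> j" "j < s + n" for j
  proof -
    have nm: "n \<le> n*m" using m1 by simp
    have jS: "j < S" using that S_split nm by linarith
    have "u $ j = ?x $ j" using Q1_keep[OF u jS that(1)] by simp
    moreover have "\<bar>?x $ j\<bar> \<le> vec_inf_norm ?x" by (rule vec_norm_ge) (use Q1_carrier jS in simp)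
    ultimately show ?thesis by simp
  qed
  show ?thesis
  proof (rule Q1Q2_contract[OF x])
    fix j assume j: "n*m - n \<le> j" "j < n*m"
    have "\<bar>?x $ j\<bar> \<le> vec_inf_norm ?x * rho^(m - j div n)" by (rule Q1_bnd[OF u ub blk_m1(1)[OF j]])
    thus "\<bar>?x $ j\<bar> \<le> rho * vec_inf_norm ?x" using blk_m1(2)[OF j] by (simp add: mult.commute)
  qed (use rho_pos vec_norm_nonneg in simp)
qed

lemma T21_vec: assumes y: "y \<in> carrier_vec S"
  shows "vec_inf_norm (Q1 *\<^sub>v (Q2 *\<^sub>v y)) \<le> vec_inf_norm y"
proof (rule Q1Q2_contract[OF y])
  fix j assume j: "n*m - n \<le> j" "j < n*m"
  have "j < S" using j S_split by linarith
  thus "\<bar>y $ j\<bar> \<le> vec_inf_norm y" using vec_norm_ge[of j y] y by simp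
qed (rule vec_norm_nonneg)

lemma T12_vec: assumes y: "y \<in> carrier_vec S"
  shows "vec_inf_norm (Q2 *\<^sub>v (Q1 *\<^sub>v y)) \<le> rho * vec_inf_norm y"
proof (rule vec_norm_le)
  show "0 \<le> rho * vec_inf_norm y" using rho_pos vec_norm_nonneg by simp
  let ?z = "Q1 *\<^sub>v y"
  have z: "?z \<in> carrier_vec S" by (rule Q1_carrier_vec[OF y])
  have yb: "\<bar>y $ j\<bar> \<le> vec_inf_norm y" if "s \<le> j" "j < s + n" for j
  proof -
    have nm: "n \<le> n*m" using m1 by simp
    have jS: "j < S" using that S_split nm by linarith
    thus ?thesis using vec_norm_ge[of j y] y by simp
  qed
  have zs: "\<bar>?z $ p\<bar> \<le> rho * vec_inf_norm y" if "p < s" "1 \<le> m - p div n" for p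
  proof -
    have "\<bar>?z $ p\<bar> \<le> vec_inf_norm y * rho^(m - p div n)" by (rule Q1_bnd[OF y yb that(1)])
    also have "\<dots> \<le> vec_inf_norm y * rho" using rho_pow_le[OF that(2)] vec_norm_nonneg by (simp add: mult_left_mono)
    finally show ?thesis by (simp add: mult.commute)
  qed
  fix p assume "p < dim_vec (Q2 *\<^sub>v ?z)" hence p: "p < S" using Q2_carrier by simp
  show "\<bar>(Q2 *\<^sub>v ?z) $ p\<bar> \<le> rho * vec_inf_norm y"
  proof (cases "p < n*m")
    case True
    have "p div n < m" using True n2 by (simp add: div_less_iff_less_mult mult.commute)
    moreover have "p < s" using True by (simp add: s_def)
    ultimately show ?thesis using Q2_keep[OF z True] zs[of p] by simp
  next
    case False
    show ?thesis
    proof (rule Q2_bnd[OF z _ p])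
      fix j assume j: "n*m - n \<le> j" "j < n*m"
      show "\<bar>?z $ j\<bar> \<le> rho * vec_inf_norm y" using zs[OF blk_m1(1)[OF j]] blk_m1(2)[OF j] by simp
    qed (use False in simp)
  qed
qed

end


lemma iter_carrier: fixes T :: "real mat" assumes T: "T \<in> carrier_mat S S" and v: "v \<in> carrier_vec S" and x0: "x0 \<in> carrier_vec S"
  shows "schwarz_iter T v x0 k \<in> carrier_vec S"
  by (induction k) (use T v x0 in auto)

lemma iter_err: fixes T :: "real mat" assumes T: "T \<in> carrier_mat S S" and x: "x \<in> carrier_vec S" and x0: "x0 \<in> carrier_vec S"
  shows "x - schwarz_iter T ((1\<^sub>m S - T) *\<^sub>v x) x0 (Suc k) = T *\<^sub>v (x - schwarz_iter T ((1\<^sub>m S - T) *\<^sub>v x) x0 k)"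
proof -
  let ?v = "(1\<^sub>m S - T) *\<^sub>v x"
  let ?it = "schwarz_iter T ?v x0 k"
  have v: "?v = x - T *\<^sub>v x" using T x by (subst minus_mult_distrib_mat_vec[of _ S S]) auto
  have vc: "?v \<in> carrier_vec S" by (rule mult_mat_vec_carrier[OF minus_carrier_mat[OF T] x])
  have it: "?it \<in> carrier_vec S" by (rule iter_carrier[OF T vc x0])
  have r: "T *\<^sub>v (x - ?it) = T *\<^sub>v x - T *\<^sub>v ?it" using T x it by (rule mult_minus_distrib_mat_vec)
  show ?thesis unfolding r using T x it by (intro eq_vecI) (auto simp: v)
qed

lemma err_decay: fixes e :: "nat \<Rightarrow> real vec" and T :: "real mat"
  assumes e1: "vec_inf_norm (e (Suc 0)) \<le> mat_inf_norm T * vec_inf_norm (e 0)"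
  and st: "\<And>k. vec_inf_norm (e (Suc (Suc k))) \<le> r * vec_inf_norm (e (Suc k))" and r: "0 \<le> r"
  shows "vec_inf_norm (e (Suc k)) \<le> r^k * (mat_inf_norm T * vec_inf_norm (e 0))"
proof (induction k)
  case 0 thus ?case using e1 by simp
next
  case (Suc k)
  have "vec_inf_norm (e (Suc (Suc k))) \<le> r * vec_inf_norm (e (Suc k))" by (rule st)
  also have "\<dots> \<le> r * (r^k * (mat_inf_norm T * vec_inf_norm (e 0)))" using Suc r by (simp add: mult_left_mono)
  finally show ?case by (simp add: mult.assoc)
qed

context shk begin

lemma T12_carrier: "T12 eps beta M N \<in> carrier_mat S S" unfolding T12_def using Q1_carrier Q2_carrier by simp
lemma T21_carrier: "T21 eps beta M N \<in> carrier_mat S S" unfolding T21_def using Q1_carrier Q2_carrier by simp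

lemma T12_mult: "y \<in> carrier_vec S \<Longrightarrow> T12 eps beta M N *\<^sub>v y = Q2 *\<^sub>v (Q1 *\<^sub>v y)"
  unfolding T12_def using Q1_carrier Q2_carrier by simp
lemma T21_mult: "y \<in> carrier_vec S \<Longrightarrow> T21 eps beta M N *\<^sub>v y = Q1 *\<^sub>v (Q2 *\<^sub>v y)"
  unfolding T21_def using Q1_carrier Q2_carrier by simp

lemma T12_norm: "mat_inf_norm (T12 eps beta M N) \<le> rho"
proof (rule mat_norm_from_vec)
  show "0 \<le> rho" using rho_pos by simp
  fix y :: "real vec" assume "y \<in> carrier_vec (dim_col (T12 eps beta M N))"
  hence y: "y \<in> carrier_vec S" using T12_carrier by simp
  show "vec_inf_norm (T12 eps beta M N *\<^sub>v y) \<le> rho * vec_inf_norm y" unfolding T12_mult[OF y] by (rule T12_vec[OF y])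
qed

lemma T21_norm: "mat_inf_norm (T21 eps beta M N) \<le> 1"
proof (rule mat_norm_from_vec)
  fix y :: "real vec" assume "y \<in> carrier_vec (dim_col (T21 eps beta M N))"
  hence y: "y \<in> carrier_vec S" using T21_carrier by simp
  show "vec_inf_norm (T21 eps beta M N *\<^sub>v y) \<le> 1 * vec_inf_norm y" unfolding T21_mult[OF y] using T21_vec[OF y] by simp
qed simp

lemma main_iter: assumes TT: "T \<in> {T12 eps beta M N, T21 eps beta M N}"
  and b: "b \<in> carrier_vec S" and x0: "x0 \<in> carrier_vec S"
  and x_def: "x = minv (calA eps beta M N) *\<^sub>v b"
  and e_def: "e = (\<lambda>k. x - schwarz_iter T ((1\<^sub>m S - T) *\<^sub>v x) x0 k)"
  and e0: "e 0 \<noteq> 0\<^sub>v S"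
  shows "vec_inf_norm (e (Suc k)) / vec_inf_norm (e 0) \<le> rho ^ k * mat_inf_norm T"
proof -
  have T: "T \<in> carrier_mat S S" using TT T12_carrier T21_carrier by auto
  have x: "x \<in> carrier_vec S" unfolding x_def using calA_inv b by simp
  have vc: "(1\<^sub>m S - T) *\<^sub>v x \<in> carrier_vec S" by (rule mult_mat_vec_carrier[OF minus_carrier_mat[OF T] x])
  have ec: "e k \<in> carrier_vec S" for k unfolding e_def using iter_carrier[OF T vc x0] x by simp
  have es: "e (Suc k) = T *\<^sub>v e k" for k unfolding e_def by (rule iter_err[OF T x x0])
  have e1: "vec_inf_norm (e (Suc 0)) \<le> mat_inf_norm T * vec_inf_norm (e 0)"
    unfolding es using mat_vec_norm[of "e 0" T] ec T by simp
  have st: "vec_inf_norm (e (Suc (Suc k))) \<le> rho * vec_inf_norm (e (Suc k))" for k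
  proof (cases "T = T12 eps beta M N")
    case True
    show ?thesis unfolding es[of "Suc k"] True T12_mult[OF ec] by (rule T12_vec[OF ec])
  next
    case False
    hence T21: "T = T21 eps beta M N" using TT by simp
    have "e (Suc k) = Q1 *\<^sub>v (Q2 *\<^sub>v e k)" unfolding es T21 T21_mult[OF ec] ..
    moreover have "e (Suc (Suc k)) = Q1 *\<^sub>v (Q2 *\<^sub>v e (Suc k))" unfolding es[of "Suc k"] T21 T21_mult[OF ec] ..
    ultimately show ?thesis using T21_range[OF Q2_carrier_vec[OF ec[of k]]] by simp
  qed
  have "vec_inf_norm (e (Suc k)) \<le> rho^k * (mat_inf_norm T * vec_inf_norm (e 0))"
    by (rule err_decay[OF e1 st]) (use rho_pos in simp)
  moreover have "0 < vec_inf_norm (e 0)" by (rule vec_norm_pos[OF ec e0])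
  ultimately show ?thesis by (simp add: divide_le_eq mult.assoc)
qed

lemma main: "mat_inf_norm (T12 eps beta M N) \<le> eps / (eps + Hy eps M)
       \<and> mat_inf_norm (T21 eps beta M N) \<le> 1
       \<and> (\<forall>T \<in> {T12 eps beta M N, T21 eps beta M N}. \<forall>b x0.
            b \<in> carrier_vec (sz M N) \<longrightarrow> x0 \<in> carrier_vec (sz M N) \<longrightarrow>
            (let x = minv (calA eps beta M N) *\<^sub>v b;
                 v = (1\<^sub>m (sz M N) - T) *\<^sub>v x;
                 e = (\<lambda>k. x - schwarz_iter T v x0 k)
             in e 0 \<noteq> 0\<^sub>v (sz M N) \<longrightarrow>
                (\<forall>k. vec_inf_norm (e (Suc k)) / vec_inf_norm (e 0)
                       \<le> (eps / (eps + Hy eps M)) ^ k * mat_inf_norm T)))"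
  unfolding sz_eq rho_def[unfolded H_def, symmetric] Let_def
  using T12_norm T21_norm main_iter by blast

end

theorem corollary5p2:
  fixes eps beta :: real and M N :: nat
  assumes "eps > 0" and "beta \<ge> 0" and "even M" and "M \<ge> 4" and "N \<ge> 3"
  shows "mat_inf_norm (T12 eps beta M N) \<le> eps / (eps + Hy eps M)
       \<and> mat_inf_norm (T21 eps beta M N) \<le> 1
       \<and> (\<forall>T \<in> {T12 eps beta M N, T21 eps beta M N}. \<forall>b x0.
            b \<in> carrier_vec (sz M N) \<longrightarrow> x0 \<in> carrier_vec (sz M N) \<longrightarrow>
            (let x = minv (calA eps beta M N) *\<^sub>v b;
                 v = (1\<^sub>m (sz M N) - T) *\<^sub>v x;
                 e = (\<lambda>k. x - schwarz_iter T v x0 k)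
             in e 0 \<noteq> 0\<^sub>v (sz M N) \<longrightarrow>
                (\<forall>k. vec_inf_norm (e (Suc k)) / vec_inf_norm (e 0)
                       \<le> (eps / (eps + Hy eps M)) ^ k * mat_inf_norm T)))"
proof -
  interpret shk eps beta M N using assms by unfold_locales
  show ?thesis by (rule main)
qed


end
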